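(* Let $\mathcal{X}_1,\mathcal{X}_2$ be non-empty sets, $\mathcal{B}_1\subseteq\mathcal{P}(\mathcal{X}_1)\setminus\{\emptyset\}$, $\mathcal{B}_2\subseteq\mathcal{P}(\mathcal{X}_2)\setminus\{\emptyset\}$, and for $i\in\{1,2\}$ let $\underline{P}_i$ be a coherent conditional lower prevision on $\mathcal{C}_i\subseteq\mathcal{C}(\mathcal{X}_i)$ with natural extension $\underline{E}_i$ to $\mathcal{C}(\mathcal{X}_i)$. Let $\{i,j\}=\{1,2\}$. Then for any $f\in\mathcal{G}(\mathcal{X}_i)$, any $h\in\mathcal{G}(\mathcal{X}_j)$ and any $\mathcal{B}_i$-measurable $g\in\mathcal{G}_{\geq0}(\mathcal{X}_i)$, $$(\underline{P}_1\otimes\underline{P}_2)(f+gh)=\underline{E}_i\big(f+g\,\underline{E}_j(h)\big).$$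
   Context: Gambles on a non-empty set $\mathcal{X}$ are bounded real functions; $\mathcal{G}(\mathcal{X})$, $\mathcal{G}_{\geq0}(\mathcal{X})$, $\mathcal{G}_{>0}(\mathcal{X})$ denote all gambles, non-negative gambles, non-negative non-zero gambles. For $\mathcal{A}\subseteq\mathcal{G}(\mathcal{X})$: $\mathrm{posi}(\mathcal{A}):=\{\sum_{i=1}^n\lambda_if_i\colon n\in\mathbb{N},\lambda_i>0,f_i\in\mathcal{A}\}$, $\mathcal{E}(\mathcal{A}):=\mathrm{posi}(\mathcal{A}\cup\mathcal{G}_{>0}(\mathcal{X}))$. A coherent set of desirable gambles $\mathcal{D}\subseteq\mathcal{G}(\mathcal{X})$ satisfies: (D1) $f\geq0,f\neq0\Rightarrow f\in\mathcal{D}$; (D2) $f\in\mathcal{D},\lambda>0\Rightarrow\lambda f\in\mathcal{D}$; (D3) $f,g\in\mathcal{D}\Rightarrow f+g\in\mathcal{D}$; (D4) $f\leq0\Rightarrow f\notin\mathcal{D}$. $\mathcal{C}(\mathcal{X}):=\mathcal{G}(\mathcal{X})\times(\mathcal{P}(\mathcal{X})\setminus\{\emptyset\})$; a conditional lower prevision on $\mathcal{C}\subseteq\mathcal{C}(\mathcal{X})$ is a map $(f,B)\mapsto\underline{P}(f\vert B)\in\mathbb{R}\cup\{\pm\infty\}$. For $\mathcal{D}\subseteq\mathcal{G}(\mathcal{X})$, $\underline{P}_{\mathcal{D}}(f\vert B):=\sup\{\mu\in\mathbb{R}\colon[f-\mu]\mathbb{I}_B\in\mathcal{D}\}$. $\underline{P}$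 is coherent if $\underline{P}=\underline{P}_{\mathcal{D}}$ on its domain for some coherent set of desirable gambles $\mathcal{D}$. For coherent $\underline{P}$ on $\mathcal{C}$, $\mathcal{E}(\underline{P}):=\mathcal{E}(\{[f-\mu]\mathbb{I}_B\colon(f,B)\in\mathcal{C},\mu<\underline{P}(f\vert B)\})$ and its natural extension is $\underline{E}(f\vert B):=\underline{P}_{\mathcal{E}(\underline{P})}(f\vert B)$ for all $(f,B)\in\mathcal{C}(\mathcal{X})$. Unconditional notation: $\underline{P}(f):=\underline{P}(f\vert\mathcal{X})$. Gambles on $\mathcal{X}_i$ are identified with their cylindrical extensions to $\mathcal{X}_1\times\mathcal{X}_2$, events $B\subseteq\mathcal{X}_1$ with $B\times\mathcal{X}_2$ (similarly for $\mathcal{X}_2$). For coherent sets of desirable gambles $\mathcal{D}_1,\mathcal{D}_2$: $\mathcal{D}_1\otimes\mathcal{D}_2:=\mathcal{E}(\mathcal{A}_{1\to2}\cup\mathcal{A}_{2\to1})$, $\mathcal{A}_{1\to2}:=\{f_2(X_2)\mathbb{I}_{B_1}(X_1)\colon f_2\in\mathcal{D}_2,B_1\in\mathcal{B}_1\cup\{\mathcal{X}_1\}\}$, $\mathcal{A}_{2\to1}:=\{f_1(X_1)\mathbb{I}_{B_2}(X_2)\colon f_1\in\mathcal{D}_1,B_2\in\mathcal{B}_2\cup\{\mathcal{X}_2\}\}$. Then $(\underline{P}_1\otimes\underline{P}_2)(f\vert B):=\underline{P}_{\mathcal{D}}(f\vert B)$ for $(f,B)\in\mathcal{C}(\mathcal{X}_1\times\mathcal{X}_2)$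 with $\mathcal{D}=\mathcal{E}(\underline{P}_1)\otimes\mathcal{E}(\underline{P}_2)$. Measurability: for $\mathcal{B}\subseteq\mathcal{P}(\mathcal{X})\setminus\{\emptyset\}$, $g\in\mathcal{G}_{\geq0}(\mathcal{X})$ is simple $\mathcal{B}$-measurable if $g=c_0+\sum_{k=1}^nc_k\mathbb{I}_{B_k}$ for some $n\in\mathbb{N}\cup\{0\}$, $c_0,\dots,c_n\geq0$, $B_k\in\mathcal{B}$; $g\in\mathcal{G}_{\geq0}(\mathcal{X})$ is $\mathcal{B}$-measurable if there is a sequence of simple $\mathcal{B}$-measurable $g_n\in\mathcal{G}_{\geq0}(\mathcal{X})$ with $\sup|g-g_n|\to0$. *)

theory Defs
  imports Complex_Main "HOL-Library.Extended_Real" "HOL-Library.Indicator_Function"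
begin

text \<open>The possibility space X is modelled as the (non-empty) universe of a type.
  Gambles are bounded real functions on it.\<close>

definition gamble :: "('a \<Rightarrow> real) \<Rightarrow> bool" where
  "gamble f \<longleftrightarrow> (\<exists>M. \<forall>x. \<bar>f x\<bar> \<le> M)"

definition gambles :: "('a \<Rightarrow> real) set" where
  "gambles = {f. gamble f}"

definition nonneg_gambles :: "('a \<Rightarrow> real) set" where
  "nonneg_gambles = {f. gamble f \<and> (\<forall>x. 0 \<le> f x)}"

definition pos_gambles :: "('a \<Rightarrow> real) set" where
  "pos_gambles = {f. gamble f \<and> (\<forall>x. 0 \<le> f x) \<and> f \<noteq> (\<lambda>_. 0)}"

definition posi :: "('a \<Rightarrow> real) set \<Rightarrow> ('a \<Rightarrow> real) set" where
  "posi A = {f. \<exists>n::nat. n \<ge> 1 \<and> (\<exists>lam fs. (\<forall>i<n. lam i > (0::real) \<and> fs i \<in> A)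
                 \<and> f = (\<lambda>x. \<Sum>i<n. lam i * fs i x))}"

definition Ext :: "('a \<Rightarrow> real) set \<Rightarrow> ('a \<Rightarrow> real) set" where
  "Ext A = posi (A \<union> pos_gambles)"

definition coherent_D :: "('a \<Rightarrow> real) set \<Rightarrow> bool" where
  "coherent_D D \<longleftrightarrow> D \<subseteq> gambles
     \<and> (\<forall>f. gamble f \<and> (\<forall>x. f x \<ge> 0) \<and> f \<noteq> (\<lambda>_. 0) \<longrightarrow> f \<in> D)
     \<and> (\<forall>f \<in> D. \<forall>lam::real. lam > 0 \<longrightarrow> (\<lambda>x. lam * f x) \<in> D)
     \<and> (\<forall>f \<in> D. \<forall>g \<in> D. (\<lambda>x. f x + g x) \<in> D)
     \<and> (\<forall>f. (\<forall>x. f x \<le> 0) \<longrightarrow> f \<notin> D)"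

definition cond_domain :: "(('a \<Rightarrow> real) \<times> 'a set) set" where
  "cond_domain = {(f, B). gamble f \<and> B \<noteq> {}}"

definition lowprev_D :: "('a \<Rightarrow> real) set \<Rightarrow> ('a \<Rightarrow> real) \<Rightarrow> 'a set \<Rightarrow> ereal" where
  "lowprev_D D f B = Sup (ereal ` {\<mu>. (\<lambda>x. (f x - \<mu>) * indicator B x) \<in> D})"

definition coherent_lp ::
  "(('a \<Rightarrow> real) \<Rightarrow> 'a set \<Rightarrow> ereal) \<Rightarrow> (('a \<Rightarrow> real) \<times> 'a set) set \<Rightarrow> bool" where
  "coherent_lp P C \<longleftrightarrow> C \<subseteq> cond_domain
     \<and> (\<exists>D. coherent_D D \<and> (\<forall>(f, B) \<in> C. P f B = lowprev_D D f B))"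

definition ext_lp ::
  "(('a \<Rightarrow> real) \<Rightarrow> 'a set \<Rightarrow> ereal) \<Rightarrow> (('a \<Rightarrow> real) \<times> 'a set) set \<Rightarrow> ('a \<Rightarrow> real) set" where
  "ext_lp P C = Ext {(\<lambda>x. (f x - \<mu>) * indicator B x) | f B \<mu>. (f, B) \<in> C \<and> ereal \<mu> < P f B}"

definition nat_ext ::
  "(('a \<Rightarrow> real) \<Rightarrow> 'a set \<Rightarrow> ereal) \<Rightarrow> (('a \<Rightarrow> real) \<times> 'a set) set \<Rightarrow> ('a \<Rightarrow> real) \<Rightarrow> 'a set \<Rightarrow> ereal" where
  "nat_ext P C f B = lowprev_D (ext_lp P C) f B"

definition prod_D ::
  "('a \<Rightarrow> real) set \<Rightarrow> 'a set set \<Rightarrow> ('b \<Rightarrow> real) set \<Rightarrow> 'b set set \<Rightarrow> ('a \<times> 'b \<Rightarrow> real) set" where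
  "prod_D D1 \<B>1 D2 \<B>2 = Ext
     ({(\<lambda>(x1, x2). f2 x2 * indicator B1 x1) | f2 B1. f2 \<in> D2 \<and> B1 \<in> \<B>1 \<union> {UNIV}}
    \<union> {(\<lambda>(x1, x2). f1 x1 * indicator B2 x2) | f1 B2. f1 \<in> D1 \<and> B2 \<in> \<B>2 \<union> {UNIV}})"

definition prod_lp ::
  "(('a \<Rightarrow> real) \<Rightarrow> 'a set \<Rightarrow> ereal) \<Rightarrow> (('a \<Rightarrow> real) \<times> 'a set) set \<Rightarrow> 'a set set \<Rightarrow>
   (('b \<Rightarrow> real) \<Rightarrow> 'b set \<Rightarrow> ereal) \<Rightarrow> (('b \<Rightarrow> real) \<times> 'b set) set \<Rightarrow> 'b set set \<Rightarrow>
   ('a \<times> 'b \<Rightarrow> real) \<Rightarrow> ('a \<times> 'b) set \<Rightarrow> ereal" where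
  "prod_lp P1 C1 \<B>1 P2 C2 \<B>2 f B = lowprev_D (prod_D (ext_lp P1 C1) \<B>1 (ext_lp P2 C2) \<B>2) f B"

definition simple_meas :: "'a set set \<Rightarrow> ('a \<Rightarrow> real) \<Rightarrow> bool" where
  "simple_meas \<B> g \<longleftrightarrow> (\<exists>(n::nat) (c::nat \<Rightarrow> real) (B::nat \<Rightarrow> 'a set).
      (\<forall>k \<le> n. c k \<ge> 0) \<and> (\<forall>k \<in> {1..n}. B k \<in> \<B>)
      \<and> g = (\<lambda>x. c 0 + (\<Sum>k=1..n. c k * indicator (B k) x)))"

definition meas :: "'a set set \<Rightarrow> ('a \<Rightarrow> real) \<Rightarrow> bool" where
  "meas \<B> g \<longleftrightarrow> g \<in> nonneg_gambles \<and>
     (\<exists>gs::nat \<Rightarrow> 'a \<Rightarrow> real. (\<forall>n. simple_meas \<B> (gs n))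
        \<and> (\<lambda>n. SUP x. \<bar>g x - gs n x\<bar>) \<longlonglongrightarrow> 0)"

end

theory Submission
  imports Defs
begin


section \<open>Gambles\<close>

lemma gambleI: "(\<And>x. \<bar>f x\<bar> \<le> M) \<Longrightarrow> gamble f"
  unfolding gamble_def by blast

lemma gambleE: assumes "gamble f" obtains M where "\<And>x. \<bar>f x\<bar> \<le> M" "M \<ge> 0"
proof -
  obtain M where M: "\<And>x. \<bar>f x\<bar> \<le> M" using assms unfolding gamble_def by blast
  have "0 \<le> M" using M[of undefined] by linarith
  then show ?thesis using that M by blast
qed

lemma gamble_const[simp]: "gamble (\<lambda>x. c)"
  by (rule gambleI[of _ "\<bar>c\<bar>"]) simp

lemma gamble_add: "gamble f \<Longrightarrow> gamble g \<Longrightarrow> gamble (\<lambda>x. f x + g x)"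
proof -
  assume "gamble f" "gamble g"
  then obtain M N where "\<And>x. \<bar>f x\<bar> \<le> M" "\<And>x. \<bar>g x\<bar> \<le> N"
    by (meson gambleE)
  then show ?thesis by (intro gambleI[of _ "M+N"]) (metis abs_triangle_ineq add_mono order_trans)
qed

lemma gamble_mult: "gamble f \<Longrightarrow> gamble g \<Longrightarrow> gamble (\<lambda>x. f x * g x)"
proof -
  assume "gamble f" "gamble g"
  then obtain M N where M: "\<And>x. \<bar>f x\<bar> \<le> M" "M \<ge> 0" and N: "\<And>x. \<bar>g x\<bar> \<le> N" "N \<ge> 0"
    by (meson gambleE)
  have "\<bar>f x * g x\<bar> \<le> M * N" for x
    unfolding abs_mult by (intro mult_mono) (use M N in auto)
  then show ?thesis by (rule gambleI)
qed

lemma gamble_uminus: "gamble f \<Longrightarrow> gamble (\<lambda>x. - f x)"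
  unfolding gamble_def by auto

lemma gamble_diff: "gamble f \<Longrightarrow> gamble g \<Longrightarrow> gamble (\<lambda>x. f x - g x)"
  using gamble_add[of f "\<lambda>x. - g x"] gamble_uminus[of g] by simp

lemma gamble_cmult: "gamble f \<Longrightarrow> gamble (\<lambda>x. c * f x)"
  using gamble_mult[of "\<lambda>x. c" f] by simp

lemma gamble_indicator[simp]: "gamble (indicator B)"
  unfolding gamble_def by (intro exI[of _ 1] allI) (simp split: split_indicator)

lemma gamble_comp: "gamble f \<Longrightarrow> gamble (\<lambda>x. f (k x))"
  unfolding gamble_def by blast

lemma gamble_sum: assumes "\<And>i. i \<in> I \<Longrightarrow> gamble (f i)" shows "gamble (\<lambda>x. \<Sum>i\<in>I. f i x)"
proof (cases "finite I")
  case True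
  then show ?thesis using assms
  proof (induction I rule: finite_induct)
    case empty then show ?case by simp
  next
    case (insert i F)
    have "gamble (\<lambda>x. f i x + (\<Sum>i\<in>F. f i x))"
      by (rule gamble_add) (use insert in auto)
    then show ?case using insert(1,2) by simp
  qed
next
  case False then show ?thesis by simp
qed

section \<open>Coherent sets\<close>

lemma cohD_gamble: "coherent_D D \<Longrightarrow> a \<in> D \<Longrightarrow> gamble a"
  unfolding coherent_D_def gambles_def by blast

lemma cohD_pos: assumes "coherent_D D" "gamble a" "\<And>x. a x \<ge> 0" "a \<noteq> (\<lambda>_. 0)" shows "a \<in> D"
proof -
  have "\<forall>f. gamble f \<and> (\<forall>x. f x \<ge> 0) \<and> f \<noteq> (\<lambda>_. 0) \<longrightarrow> f \<in> D"
    by (fact conjunct1[OF conjunct2[OF assms(1)[unfolded coherent_D_def]]])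
  then show ?thesis using assms(2-4) by blast
qed

lemma cohD_scale: assumes "coherent_D D" "a \<in> D" "c > 0" shows "(\<lambda>x. c * a x) \<in> D"
proof -
  have "\<forall>f \<in> D. \<forall>lam::real. lam > 0 \<longrightarrow> (\<lambda>x. lam * f x) \<in> D"
    by (fact conjunct1[OF conjunct2[OF conjunct2[OF assms(1)[unfolded coherent_D_def]]]])
  then show ?thesis using assms(2-3) by blast
qed

lemma cohD_add: assumes "coherent_D D" "a \<in> D" "b \<in> D" shows "(\<lambda>x. a x + b x) \<in> D"
proof -
  have "\<forall>f \<in> D. \<forall>g \<in> D. (\<lambda>x. f x + g x) \<in> D"
    by (fact conjunct1[OF conjunct2[OF conjunct2[OF conjunct2[OF assms(1)[unfolded coherent_D_def]]]]])
  then show ?thesis using assms(2-3) by blast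
qed

lemma cohD_notle: assumes "coherent_D D" "\<And>x. a x \<le> 0" shows "a \<notin> D"
proof -
  have "\<forall>f. (\<forall>x. f x \<le> 0) \<longrightarrow> f \<notin> D"
    by (fact conjunct2[OF conjunct2[OF conjunct2[OF conjunct2[OF assms(1)[unfolded coherent_D_def]]]]])
  then show ?thesis using assms(2) by blast
qed

lemma cohD_const: "coherent_D D \<Longrightarrow> c > 0 \<Longrightarrow> (\<lambda>_. c) \<in> D"
  by (rule cohD_pos) (auto dest: fun_cong)

lemma cohD_mono:
  assumes "coherent_D D" "a \<in> D" "gamble b" "\<And>x. a x \<le> b x"
  shows "b \<in> D"
proof (cases "(\<lambda>x. b x - a x) = (\<lambda>_. 0)")
  case True
  then have "b = a" by (metis (no_types) eq_iff_diff_eq_0 ext)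
  then show ?thesis using assms by simp
next
  case False
  have "(\<lambda>x. b x - a x) \<in> D"
    by (rule cohD_pos[OF assms(1)]) (use assms False in \<open>auto intro: gamble_diff cohD_gamble\<close>)
  from cohD_add[OF assms(1) assms(2) this] show ?thesis by simp
qed

lemma cohN_add: assumes "coherent_D D" "a \<in> insert (\<lambda>_. 0) D" "b \<in> insert (\<lambda>_. 0) D"
  shows "(\<lambda>x. a x + b x) \<in> insert (\<lambda>_. 0) D"
proof (cases "a = (\<lambda>_. 0)")
  case True then show ?thesis using assms(3) by simp
next
  case F1: False
  show ?thesis
  proof (cases "b = (\<lambda>_. 0)")
    case True then show ?thesis using assms(2) by simp
  next
    case False then show ?thesis using F1 assms cohD_add[of D a b] by simp
  qed
qed

lemma cohN_scale: assumes "coherent_D D" "a \<in> insert (\<lambda>_. 0) D" "c \<ge> 0"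
  shows "(\<lambda>x. c * a x) \<in> insert (\<lambda>_. 0) D"
proof (cases "c = 0 \<or> a = (\<lambda>_. 0)")
  case True then show ?thesis by auto
next
  case False then show ?thesis using assms cohD_scale[of D a c] by simp
qed

lemma cohN_gamble: "coherent_D D \<Longrightarrow> a \<in> insert (\<lambda>_. 0) D \<Longrightarrow> gamble a"
  using cohD_gamble by auto

lemma cohN_D_add: assumes "coherent_D D" "a \<in> D" "b \<in> insert (\<lambda>_. 0) D"
  shows "(\<lambda>x. a x + b x) \<in> D"
proof (cases "b = (\<lambda>_. 0)")
  case True then show ?thesis using assms(2) by simp
next
  case False then show ?thesis using assms cohD_add[of D a b] by simp
qed

lemma posi_sing: "a \<in> X \<Longrightarrow> a \<in> posi X"
  unfolding posi_def
  by (rule CollectI, rule exI[of _ 1], auto intro!: exI[of _ "\<lambda>_. 1"] exI[of _ "\<lambda>_. a"])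

lemma posiI: assumes "n \<ge> (1::nat)" "\<forall>i<n. lam i > (0::real) \<and> fs i \<in> X"
  "a = (\<lambda>x. \<Sum>i<n. lam i * fs i x)" shows "a \<in> posi X"
  unfolding posi_def mem_Collect_eq
  by (rule exI[of _ n], rule conjI[OF assms(1)], rule exI[of _ lam], rule exI[of _ fs], rule conjI[OF assms(2) assms(3)])

lemma posi_induct:
  assumes "a \<in> posi X"
    and gen: "\<And>x. x \<in> X \<Longrightarrow> R x"
    and sc: "\<And>b c. R b \<Longrightarrow> c > 0 \<Longrightarrow> R (\<lambda>x. c * b x)"
    and ad: "\<And>b b'. R b \<Longrightarrow> R b' \<Longrightarrow> R (\<lambda>x. b x + b' x)"
  shows "R a"
proof -
  obtain n lam fs where n: "n \<ge> (1::nat)" and l: "\<forall>i<n. lam i > (0::real) \<and> fs i \<in> X"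
    and a: "a = (\<lambda>x. \<Sum>i<n. lam i * fs i x)"
    using assms(1) unfolding posi_def by blast
  have "\<forall>i<m. lam i > 0 \<and> fs i \<in> X \<Longrightarrow> m \<ge> 1 \<Longrightarrow> R (\<lambda>x. \<Sum>i<m. lam i * fs i x)" for m
  proof (induction m)
    case 0 then show ?case by simp
  next
    case (Suc m)
    have last: "R (\<lambda>x. lam m * fs m x)" using Suc.prems by (intro sc gen) auto
    show ?case
    proof (cases "m = 0")
      case True then show ?thesis using last by simp
    next
      case False
      then have "R (\<lambda>x. \<Sum>i<m. lam i * fs i x)" using Suc by auto
      from ad[OF this last] show ?thesis by simp
    qed
  qed
  then show ?thesis using n l a by blast
qed

lemma posi_scale: assumes "a \<in> posi X" "c > 0" shows "(\<lambda>x. c * a x) \<in> posi X"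
proof -
  obtain n lam fs where n: "n \<ge> (1::nat)" and l: "\<forall>i<n. lam i > (0::real) \<and> fs i \<in> X"
    and a: "a = (\<lambda>x. \<Sum>i<n. lam i * fs i x)"
    using assms(1) unfolding posi_def by blast
  have "(\<lambda>x. c * a x) = (\<lambda>x. \<Sum>i<n. (c * lam i) * fs i x)"
    unfolding a by (simp add: sum_distrib_left mult.assoc)
  moreover have "\<forall>i<n. c * lam i > 0 \<and> fs i \<in> X" using l assms(2) by auto
  ultimately show ?thesis using n by (intro posiI) auto
qed

lemma posi_add_one: assumes "a \<in> posi X" "y \<in> X" "c > 0" shows "(\<lambda>x. a x + c * y x) \<in> posi X"
proof -
  obtain n lam fs where n: "n \<ge> (1::nat)" and l: "\<forall>i<n. lam i > (0::real) \<and> fs i \<in> X"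
    and a: "a = (\<lambda>x. \<Sum>i<n. lam i * fs i x)"
    using assms(1) unfolding posi_def by blast
  define lam' where "lam' = lam(n := c)"
  define fs' where "fs' = fs(n := y)"
  have "(\<lambda>x. a x + c * y x) = (\<lambda>x. \<Sum>i<Suc n. lam' i * fs' i x)"
    unfolding a lam'_def fs'_def by (simp add: sum.lessThan_Suc)
  moreover have "\<forall>i<Suc n. lam' i > 0 \<and> fs' i \<in> X" using l assms unfolding lam'_def fs'_def
    by (auto simp: less_Suc_eq)
  ultimately show ?thesis by (intro posiI[of "Suc n"]) auto
qed

lemma posi_add: assumes "a \<in> posi X" "b \<in> posi X" shows "(\<lambda>x. a x + b x) \<in> posi X"
proof -
  have "\<forall>a\<in>posi X. (\<lambda>x. a x + b x) \<in> posi X"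
    using assms(2)
  proof (rule posi_induct[where R="\<lambda>b. \<forall>a\<in>posi X. (\<lambda>x. a x + b x) \<in> posi X"])
    fix y assume "y \<in> X"
    then show "\<forall>a\<in>posi X. (\<lambda>x. a x + y x) \<in> posi X" using posi_add_one[of _ X y 1] by simp
  next
    fix b and c :: real
    assume IH: "\<forall>a\<in>posi X. (\<lambda>x. a x + b x) \<in> posi X" and c: "c > 0"
    show "\<forall>a\<in>posi X. (\<lambda>x. a x + c * b x) \<in> posi X"
    proof
      fix a assume "a \<in> posi X"
      then have "(\<lambda>x. (1/c) * a x) \<in> posi X" using c by (intro posi_scale) auto
      then have "(\<lambda>x. (1/c) * a x + b x) \<in> posi X" using bspec[OF IH] by simp
      from posi_scale[OF this c] show "(\<lambda>x. a x + c * b x) \<in> posi X"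
        using c by (simp add: algebra_simps)
    qed
  next
    fix b b'
    assume IH1: "\<forall>a\<in>posi X. (\<lambda>x. a x + b x) \<in> posi X"
      and IH2: "\<forall>a\<in>posi X. (\<lambda>x. a x + b' x) \<in> posi X"
    show "\<forall>a\<in>posi X. (\<lambda>x. a x + (b x + b' x)) \<in> posi X"
    proof
      fix a assume "a \<in> posi X"
      then have "(\<lambda>x. a x + b x) \<in> posi X" using bspec[OF IH1] by simp
      then have "(\<lambda>x. (a x + b x) + b' x) \<in> posi X" using bspec[OF IH2] by simp
      then show "(\<lambda>x. a x + (b x + b' x)) \<in> posi X" by (simp add: add.assoc)
    qed
  qed
  then show ?thesis using assms(1) by blast
qed

lemma posi_subset: assumes "coherent_D D" "X \<subseteq> D" shows "posi X \<subseteq> D"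
proof
  fix a assume "a \<in> posi X"
  then show "a \<in> D"
  proof (rule posi_induct[where R="\<lambda>a. a \<in> D"])
    show "x \<in> D" if "x \<in> X" for x using that assms by blast
    show "(\<lambda>x. c * b x) \<in> D" if "b \<in> D" "c > 0" for b c using cohD_scale[OF assms(1)] that by blast
    show "(\<lambda>x. b x + b' x) \<in> D" if "b \<in> D" "b' \<in> D" for b b' using cohD_add[OF assms(1)] that by blast
  qed
qed

lemma Ext_mono:
  assumes "a \<in> Ext X" "\<And>x. a x \<le> b x" "gamble (\<lambda>x. b x - a x)"
  shows "b \<in> Ext X"
proof (cases "(\<lambda>x. b x - a x) = (\<lambda>_. 0)")
  case True
  then have "b = a" by (metis (no_types) eq_iff_diff_eq_0 ext)
  then show ?thesis using assms by simp
next
  case False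
  have "(\<lambda>x. b x - a x) \<in> pos_gambles" unfolding pos_gambles_def
    using assms(2,3) False by simp
  then have "(\<lambda>x. b x - a x) \<in> Ext X" unfolding Ext_def by (intro posi_sing) auto
  from posi_add[OF assms(1)[unfolded Ext_def] this[unfolded Ext_def]] show ?thesis
    unfolding Ext_def by simp
qed

lemma Ext_coherent:
  assumes "coherent_D D" "X \<subseteq> D"
  shows "coherent_D (Ext X)"
proof -
  have pos: "pos_gambles \<subseteq> D" using assms(1) unfolding pos_gambles_def coherent_D_def by auto
  have sub: "Ext X \<subseteq> D" unfolding Ext_def using assms pos by (intro posi_subset) auto
  show ?thesis unfolding coherent_D_def
  proof (intro conjI allI impI ballI)
    show "Ext X \<subseteq> gambles" using sub assms(1) unfolding coherent_D_def by blast
    show "f \<in> Ext X" if "gamble f \<and> (\<forall>x. 0 \<le> f x) \<and> f \<noteq> (\<lambda>_. 0)" for f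
    proof -
      have "f \<in> pos_gambles" unfolding pos_gambles_def using that by simp
      then show ?thesis unfolding Ext_def by (intro posi_sing) simp
    qed
    show "(\<lambda>x. lam * f x) \<in> Ext X" if "f \<in> Ext X" "0 < lam" for f lam
      using that unfolding Ext_def by (rule posi_scale)
    show "(\<lambda>x. f x + g x) \<in> Ext X" if "f \<in> Ext X" "g \<in> Ext X" for f g
      using that unfolding Ext_def by (rule posi_add)
    show "f \<notin> Ext X" if "\<forall>x. f x \<le> 0" for f
      using that sub cohD_notle[OF assms(1)] by blast
  qed
qed



lemma lowprev_UNIV: "lowprev_D D f UNIV = Sup (ereal ` {\<mu>. (\<lambda>x. f x - \<mu>) \<in> D})"
  unfolding lowprev_D_def by (simp add: indicator_UNIV)

lemma lowprev_finite:
  assumes coh: "coherent_D D" and h: "gamble h"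
  obtains e where "lowprev_D D h UNIV = ereal e"
    "\<And>\<nu>. \<nu> < e \<Longrightarrow> (\<lambda>x. h x - \<nu>) \<in> D"
    "\<And>\<nu>. \<nu> > e \<Longrightarrow> (\<lambda>x. h x - \<nu>) \<notin> D"
proof -
  define T where "T = {\<mu>. (\<lambda>x. h x - \<mu>) \<in> D}"
  obtain M where M: "\<And>x. \<bar>h x\<bar> \<le> M" "M \<ge> 0" using gambleE[OF h] by blast
  have gh: "gamble (\<lambda>x. h x - c)" for c by (rule gamble_diff[OF h gamble_const])
  have down: "\<nu> \<in> T" if "\<mu> \<in> T" "\<nu> \<le> \<mu>" for \<mu> \<nu>
  proof -
    have "(\<lambda>x. h x - \<mu>) \<in> D" using that(1) unfolding T_def by simp
    from cohD_mono[OF coh this gh] show ?thesis unfolding T_def using that(2) by simp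
  qed
  have lowT: "- M - 1 \<in> T"
  proof -
    have "(\<lambda>_. 1::real) \<in> D" by (rule cohD_const[OF coh]) simp
    moreover have "1 \<le> h x - (- M - 1)" for x using M(1)[of x] by linarith
    ultimately show ?thesis unfolding T_def using cohD_mono[OF coh _ gh] by blast
  qed
  have upT: "\<mu> \<le> M" if "\<mu> \<in> T" for \<mu>
  proof (rule ccontr)
    assume "\<not> \<mu> \<le> M"
    then have "\<And>x. h x - \<mu> \<le> 0" using M(1) by (smt (verit))
    then have "(\<lambda>x. h x - \<mu>) \<notin> D" by (rule cohD_notle[OF coh])
    then show False using that unfolding T_def by simp
  qed
  define E where "E = Sup (ereal ` T)"
  have E1: "ereal (- M - 1) \<le> E" unfolding E_def using lowT by (intro Sup_upper) auto
  have E2: "E \<le> ereal M" unfolding E_def using upT by (intro Sup_least) auto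
  obtain e where e: "E = ereal e" using E1 E2 by (cases E) auto
  show ?thesis
  proof (rule that[of e])
    show "lowprev_D D h UNIV = ereal e" using e unfolding E_def T_def lowprev_UNIV .
    show "(\<lambda>x. h x - \<nu>) \<in> D" if "\<nu> < e" for \<nu>
    proof -
      have "ereal \<nu> < Sup (ereal ` T)" using that e unfolding E_def by simp
      then obtain \<mu> where "\<mu> \<in> T" "ereal \<nu> < ereal \<mu>" unfolding less_SUP_iff by blast
      then show ?thesis using down[of \<mu> \<nu>] unfolding T_def by auto
    qed
    show "(\<lambda>x. h x - \<nu>) \<notin> D" if "\<nu> > e" for \<nu>
    proof
      assume "(\<lambda>x. h x - \<nu>) \<in> D"
      then have "ereal \<nu> \<le> E" unfolding E_def T_def by (intro Sup_upper) auto
      then show False using that e by simp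
    qed
  qed
qed

lemma ext_lp_coherent:
  assumes "coherent_lp P C"
  shows "coherent_D (ext_lp P C)"
proof -
  obtain D where coh: "coherent_D D" and PD: "\<forall>(f, B) \<in> C. P f B = lowprev_D D f B"
    and C: "C \<subseteq> cond_domain"
    using assms unfolding coherent_lp_def by blast
  have "{(\<lambda>x. (f x - \<mu>) * indicator B x) | f B \<mu>. (f, B) \<in> C \<and> ereal \<mu> < P f B} \<subseteq> D"
  proof safe
    fix f B \<mu> assume fB: "(f, B) \<in> C" and lt: "ereal \<mu> < P f B"
    have "gamble f" using fB C unfolding cond_domain_def by auto
    have "ereal \<mu> < Sup (ereal ` {\<mu>. (\<lambda>x. (f x - \<mu>) * indicator B x) \<in> D})"
      using lt PD fB unfolding lowprev_D_def by auto
    then obtain \<mu>' where \<mu>': "(\<lambda>x. (f x - \<mu>') * indicator B x) \<in> D" "\<mu> < \<mu>'"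
      unfolding less_SUP_iff by auto
    show "(\<lambda>x. (f x - \<mu>) * indicator B x) \<in> D"
    proof (rule cohD_mono[OF coh \<mu>'(1)])
      show "gamble (\<lambda>x. (f x - \<mu>) * indicator B x)"
        by (intro gamble_mult gamble_diff \<open>gamble f\<close> gamble_const gamble_indicator)
      show "(f x - \<mu>') * indicator B x \<le> (f x - \<mu>) * indicator B x" for x
        using \<mu>'(2) by (simp split: split_indicator)
    qed
  qed
  then show ?thesis unfolding ext_lp_def by (rule Ext_coherent[OF coh])
qed



lemma T_props:
  assumes coh: "coherent_D D" and h: "gamble h"
  shows "{\<mu>. (\<lambda>x. h x - \<mu>) \<in> D} \<noteq> {}" "bdd_above {\<mu>. (\<lambda>x. h x - \<mu>) \<in> D}"
    "\<And>\<mu> \<nu>. (\<lambda>x. h x - \<mu>) \<in> D \<Longrightarrow> \<nu> \<le> \<mu> \<Longrightarrow> (\<lambda>x. h x - \<nu>) \<in> D"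
proof -
  obtain M where M: "\<And>x. \<bar>h x\<bar> \<le> M" "M \<ge> 0" using gambleE[OF h] by blast
  have gh: "gamble (\<lambda>x. h x - c)" for c by (rule gamble_diff[OF h gamble_const])
  show down: "(\<lambda>x. h x - \<nu>) \<in> D" if "(\<lambda>x. h x - \<mu>) \<in> D" "\<nu> \<le> \<mu>" for \<mu> \<nu>
    using cohD_mono[OF coh that(1) gh] that(2) by simp
  have "(\<lambda>_. 1::real) \<in> D" by (rule cohD_const[OF coh]) simp
  moreover have "1 \<le> h x - (- M - 1)" for x using M(1)[of x] by linarith
  ultimately have "(\<lambda>x. h x - (- M - 1)) \<in> D" using cohD_mono[OF coh _ gh] by blast
  then show "{\<mu>. (\<lambda>x. h x - \<mu>) \<in> D} \<noteq> {}" by blast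
  have upT: "\<mu> \<le> M" if "(\<lambda>x. h x - \<mu>) \<in> D" for \<mu>
  proof (rule ccontr)
    assume "\<not> \<mu> \<le> M"
    then have "\<And>x. h x - \<mu> \<le> 0" using M(1) by (smt (verit))
    then have "(\<lambda>x. h x - \<mu>) \<notin> D" by (rule cohD_notle[OF coh])
    then show False using that by simp
  qed
  then show "bdd_above {\<mu>. (\<lambda>x. h x - \<mu>) \<in> D}" unfolding bdd_above_def by blast
qed

lemma zero_contra:
  assumes "coherent_D M" "(\<lambda>x. a x - \<nu>) \<in> M" "(\<lambda>x. \<nu> - a x) \<in> M" shows False
proof -
  have "(\<lambda>x. (a x - \<nu>) + (\<nu> - a x)) \<in> M" by (rule cohD_add[OF assms])
  moreover have "(\<lambda>x. (a x - \<nu>) + (\<nu> - a x)) \<notin> M" by (rule cohD_notle[OF assms(1)]) simp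
  ultimately show False by blast
qed

definition Qf :: "('b \<Rightarrow> real) set \<Rightarrow> ('b \<Rightarrow> real) \<Rightarrow> real" where
  "Qf M a = Sup {\<mu>. (\<lambda>x. a x - \<mu>) \<in> M}"

locale maxcoh =
  fixes M :: "('b \<Rightarrow> real) set"
  assumes coh: "coherent_D M"
    and mx: "\<And>f. gamble f \<Longrightarrow> f \<notin> M \<Longrightarrow> f \<noteq> (\<lambda>_. 0) \<Longrightarrow> (\<lambda>x. - f x) \<in> M"
begin

lemma Q_lo: assumes "gamble a" "\<nu> < Qf M a" shows "(\<lambda>x. a x - \<nu>) \<in> M"
proof -
  note T = T_props[OF coh assms(1)]
  obtain \<mu> where "\<mu> \<in> {\<mu>. (\<lambda>x. a x - \<mu>) \<in> M}" "\<nu> < \<mu>"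
    using assms(2) unfolding Qf_def less_cSup_iff[OF T(1) T(2)] by blast
  then show ?thesis using T(3)[of \<mu> \<nu>] by simp
qed

lemma Q_hi: assumes "gamble a" "\<nu> > Qf M a" shows "(\<lambda>x. a x - \<nu>) \<notin> M"
proof
  note T = T_props[OF coh assms(1)]
  assume "(\<lambda>x. a x - \<nu>) \<in> M"
  then have "\<nu> \<le> Qf M a" unfolding Qf_def by (intro cSup_upper T(2)) simp
  then show False using assms(2) by simp
qed

lemma Q_const: "Qf M (\<lambda>x. c) = c"
proof -
  have "{\<mu>. (\<lambda>x. c - \<mu>) \<in> M} = {..<c}"
  proof safe
    fix \<mu> assume "(\<lambda>x. c - \<mu>) \<in> M"
    moreover have "(\<lambda>x. c - \<mu>) \<notin> M" if "\<mu> \<ge> c" by (rule cohD_notle[OF coh]) (use that in simp)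
    ultimately show "\<mu> < c" by force
  next
    fix \<mu> assume "\<mu> < c"
    then show "(\<lambda>x. c - \<mu>) \<in> M" by (intro cohD_const[OF coh]) simp
  qed
  then show ?thesis unfolding Qf_def by simp
qed

lemma Q_hi_neg: assumes "gamble a" "\<nu> > Qf M a" shows "(\<lambda>x. \<nu> - a x) \<in> M"
proof -
  have g: "gamble (\<lambda>x. a x - \<nu>)" by (rule gamble_diff[OF assms(1) gamble_const])
  have n: "(\<lambda>x. a x - \<nu>) \<notin> M" by (rule Q_hi[OF assms])
  have nz: "(\<lambda>x. a x - \<nu>) \<noteq> (\<lambda>_. 0)"
  proof
    assume "(\<lambda>x. a x - \<nu>) = (\<lambda>_. 0)"
    then have "a = (\<lambda>x. \<nu>)" by (metis (no_types) eq_iff_diff_eq_0 ext)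
    then show False using assms(2) Q_const by simp
  qed
  from mx[OF g n nz] show ?thesis by simp
qed

lemma Q_char:
  assumes "gamble a" "\<And>\<nu>. \<nu> < q \<Longrightarrow> (\<lambda>x. a x - \<nu>) \<in> M"
    "\<And>\<nu>. \<nu> > q \<Longrightarrow> (\<lambda>x. \<nu> - a x) \<in> M"
  shows "Qf M a = q"
proof (rule ccontr)
  assume ne: "Qf M a \<noteq> q"
  define \<nu> where "\<nu> = (Qf M a + q) / 2"
  show False
  proof (cases "Qf M a < q")
    case True
    then have "\<nu> < q" "\<nu> > Qf M a" unfolding \<nu>_def by auto
    then show False using assms(2)[of \<nu>] Q_hi[OF assms(1), of \<nu>] by simp
  next
    case False
    then have "\<nu> > q" "\<nu> < Qf M a" using ne unfolding \<nu>_def by auto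
    then show False using zero_contra[OF coh Q_lo[OF assms(1)] assms(3)] by blast
  qed
qed

lemma Q_add: assumes "gamble a" "gamble b" shows "Qf M (\<lambda>x. a x + b x) = Qf M a + Qf M b"
proof (rule Q_char)
  show "gamble (\<lambda>x. a x + b x)" by (rule gamble_add[OF assms])
  fix \<nu>
  show "(\<lambda>x. a x + b x - \<nu>) \<in> M" if "\<nu> < Qf M a + Qf M b"
  proof -
    define d where "d = (Qf M a + Qf M b - \<nu>) / 2"
    have "d > 0" using that unfolding d_def by simp
    have "(\<lambda>x. a x - (Qf M a - d)) \<in> M" by (rule Q_lo[OF assms(1)]) (use \<open>d > 0\<close> in simp)
    moreover have "(\<lambda>x. b x - (Qf M b - d)) \<in> M" by (rule Q_lo[OF assms(2)]) (use \<open>d > 0\<close> in simp)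
    ultimately have "(\<lambda>x. (a x - (Qf M a - d)) + (b x - (Qf M b - d))) \<in> M" by (rule cohD_add[OF coh])
    moreover have "(\<lambda>x. (a x - (Qf M a - d)) + (b x - (Qf M b - d))) = (\<lambda>x. a x + b x - \<nu>)"
      unfolding d_def by (rule ext) (simp add: field_simps)
    ultimately show ?thesis by simp
  qed
  show "(\<lambda>x. \<nu> - (a x + b x)) \<in> M" if "\<nu> > Qf M a + Qf M b"
  proof -
    define d where "d = (\<nu> - Qf M a - Qf M b) / 2"
    have "d > 0" using that unfolding d_def by simp
    have "(\<lambda>x. (Qf M a + d) - a x) \<in> M" by (rule Q_hi_neg[OF assms(1)]) (use \<open>d > 0\<close> in simp)
    moreover have "(\<lambda>x. (Qf M b + d) - b x) \<in> M" by (rule Q_hi_neg[OF assms(2)]) (use \<open>d > 0\<close> in simp)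
    ultimately have "(\<lambda>x. ((Qf M a + d) - a x) + ((Qf M b + d) - b x)) \<in> M" by (rule cohD_add[OF coh])
    moreover have "(\<lambda>x. ((Qf M a + d) - a x) + ((Qf M b + d) - b x)) = (\<lambda>x. \<nu> - (a x + b x))"
      unfolding d_def by (rule ext) (simp add: field_simps)
    ultimately show ?thesis by simp
  qed
qed

lemma Q_scale: assumes "gamble a" shows "Qf M (\<lambda>x. c * a x) = c * Qf M a"
proof (cases "c = 0")
  case True then show ?thesis using Q_const[of 0] by simp
next
  case cne: False
  show ?thesis
  proof (rule Q_char)
    show "gamble (\<lambda>x. c * a x)" by (rule gamble_cmult[OF assms])
    fix \<nu>
    show "(\<lambda>x. c * a x - \<nu>) \<in> M" if "\<nu> < c * Qf M a"
    proof (cases "c > 0")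
      case True
      then have "\<nu> / c < Qf M a" using that by (simp add: divide_less_eq mult.commute)
      then have "(\<lambda>x. a x - \<nu> / c) \<in> M" by (rule Q_lo[OF assms])
      from cohD_scale[OF coh this True] show ?thesis using True by (simp add: algebra_simps)
    next
      case False
      then have c: "c < 0" using cne by simp
      then have "\<nu> / c > Qf M a" using that by (simp add: less_divide_eq mult.commute)
      then have "(\<lambda>x. \<nu> / c - a x) \<in> M" by (rule Q_hi_neg[OF assms])
      from cohD_scale[OF coh this, of "- c"] show ?thesis using c by (simp add: algebra_simps)
    qed
    show "(\<lambda>x. \<nu> - c * a x) \<in> M" if "\<nu> > c * Qf M a"
    proof (cases "c > 0")
      case True
      then have "\<nu> / c > Qf M a" using that by (simp add: less_divide_eq mult.commute)
      then have "(\<lambda>x. \<nu> / c - a x) \<in> M" by (rule Q_hi_neg[OF assms])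
      from cohD_scale[OF coh this True] show ?thesis using True by (simp add: algebra_simps)
    next
      case False
      then have c: "c < 0" using cne by simp
      then have "\<nu> / c < Qf M a" using that by (simp add: divide_less_eq mult.commute)
      then have "(\<lambda>x. a x - \<nu> / c) \<in> M" by (rule Q_lo[OF assms])
      from cohD_scale[OF coh this, of "- c"] show ?thesis using c by (simp add: algebra_simps)
    qed
  qed
qed

lemma Q_M: assumes "a \<in> M" shows "Qf M a \<ge> 0"
proof (rule ccontr)
  assume "\<not> Qf M a \<ge> 0"
  then have "(\<lambda>x. 0 - a x) \<in> M" by (intro Q_hi_neg cohD_gamble[OF coh assms]) simp
  moreover have "(\<lambda>x. a x - 0) \<in> M" using assms by simp
  ultimately show False using zero_contra[OF coh] by blast
qed

lemma Q_nonneg: assumes "gamble a" "\<And>x. a x \<ge> 0" shows "Qf M a \<ge> 0"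
proof (cases "a = (\<lambda>_. 0)")
  case True then show ?thesis using Q_const[of 0] by simp
next
  case False
  then have "a \<in> M" by (rule cohD_pos[OF coh assms])
  then show ?thesis by (rule Q_M)
qed

end



lemma M0_in:
  assumes coh: "coherent_D D" and h: "gamble h"
    and hi: "\<And>\<nu>. \<nu> > e \<Longrightarrow> (\<lambda>x. h x - \<nu>) \<notin> D"
  defines "M0 \<equiv> D \<union> {a. gamble a \<and> (\<exists>c>0. \<exists>\<delta>>0. (\<lambda>x. a x + c * (h x - e) - \<delta>) \<in> D)}"
  shows "coherent_D M0" "D \<subseteq> M0" "\<And>\<delta>. \<delta> > 0 \<Longrightarrow> (\<lambda>x. e - h x + \<delta>) \<in> M0"
proof -
  show "D \<subseteq> M0" unfolding M0_def by blast
  show "(\<lambda>x. e - h x + \<delta>) \<in> M0" if "\<delta> > 0" for \<delta>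
  proof -
    have g: "gamble (\<lambda>x. e - h x + \<delta>)" by (intro gamble_add gamble_diff gamble_const h)
    have "(\<lambda>x. \<delta> / 2) \<in> D" by (rule cohD_const[OF coh]) (use that in simp)
    moreover have "(\<lambda>x. (e - h x + \<delta>) + 1 * (h x - e) - \<delta>/2) = (\<lambda>x. \<delta> / 2)" by (rule ext) simp
    ultimately have "(\<lambda>x. (e - h x + \<delta>) + 1 * (h x - e) - \<delta>/2) \<in> D" by simp
    then show ?thesis unfolding M0_def using g that
      by (intro UnI2 CollectI conjI g exI[of _ "1::real"] exI[of _ "\<delta>/2"]) simp_all
  qed
  define sec where "sec a \<longleftrightarrow> gamble a \<and> (\<exists>c>0. \<exists>\<delta>>0. (\<lambda>x. a x + c * (h x - e) - \<delta>) \<in> D)" for a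
  have M0: "M0 = D \<union> {a. sec a}" unfolding M0_def sec_def by simp
  have gM: "gamble a" if "a \<in> M0" for a
    using that cohD_gamble[OF coh] unfolding M0 sec_def by blast
  show "coherent_D M0" unfolding coherent_D_def
  proof (intro conjI allI impI ballI)
    show "M0 \<subseteq> gambles" using gM unfolding gambles_def by blast
    show "f \<in> M0" if "gamble f \<and> (\<forall>x. 0 \<le> f x) \<and> f \<noteq> (\<lambda>_. 0)" for f
      using cohD_pos[OF coh] that unfolding M0 by blast
    show "(\<lambda>x. lam * f x) \<in> M0" if f: "f \<in> M0" and l: "0 < lam" for f lam
    proof (cases "f \<in> D")
      case True then show ?thesis using cohD_scale[OF coh True l] unfolding M0 by blast
    next
      case False
      then have "sec f" using f unfolding M0 by blast
      then obtain c \<delta> where c: "c > 0" "\<delta> > 0" and n: "(\<lambda>x. f x + c * (h x - e) - \<delta>) \<in> D"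
        and gf: "gamble f" unfolding sec_def by blast
      have "(\<lambda>x. lam * (f x + c * (h x - e) - \<delta>)) \<in> D" by (rule cohD_scale[OF coh n l])
      moreover have "(\<lambda>x. lam * (f x + c * (h x - e) - \<delta>)) = (\<lambda>x. lam * f x + (lam * c) * (h x - e) - lam * \<delta>)"
        by (rule ext) (simp add: algebra_simps)
      ultimately have "sec (\<lambda>x. lam * f x)" unfolding sec_def using c l gamble_cmult[OF gf]
        by (intro conjI exI[of _ "lam * c"] exI[of _ "lam * \<delta>"]) simp_all
      then show ?thesis unfolding M0 by blast
    qed
    show "(\<lambda>x. f x + g x) \<in> M0" if f: "f \<in> M0" and g: "g \<in> M0" for f g
    proof -
      have gg: "gamble (\<lambda>x. f x + g x)" by (rule gamble_add[OF gM[OF f] gM[OF g]])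
      have secD: "sec (\<lambda>x. a x + b x)" if aD: "a \<in> D" and sb: "sec b" for a b
      proof -
        obtain c \<delta> where c: "c > 0" "\<delta> > 0" and n: "(\<lambda>x. b x + c * (h x - e) - \<delta>) \<in> D"
          and gb: "gamble b" using sb unfolding sec_def by blast
        have "(\<lambda>x. a x + (b x + c * (h x - e) - \<delta>)) \<in> D" by (rule cohD_add[OF coh aD n])
        moreover have "(\<lambda>x. a x + (b x + c * (h x - e) - \<delta>)) = (\<lambda>x. (a x + b x) + c * (h x - e) - \<delta>)"
          by (rule ext) (simp add: algebra_simps)
        ultimately show ?thesis unfolding sec_def using c gamble_add[OF cohD_gamble[OF coh aD] gb]
          by (intro conjI exI[of _ c] exI[of _ \<delta>]) simp_all
      qed
      show ?thesis
      proof (cases "f \<in> D")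
        case fD: True
        show ?thesis
        proof (cases "g \<in> D")
          case True then show ?thesis using cohD_add[OF coh fD True] unfolding M0 by blast
        next
          case False
          then have "sec g" using g unfolding M0 by blast
          then show ?thesis using secD[OF fD] unfolding M0 by blast
        qed
      next
        case fnD: False
        then have sf: "sec f" using f unfolding M0 by blast
        show ?thesis
        proof (cases "g \<in> D")
          case True
          have "sec (\<lambda>x. g x + f x)" by (rule secD[OF True sf])
          moreover have "(\<lambda>x. g x + f x) = (\<lambda>x. f x + g x)" by (rule ext) simp
          ultimately show ?thesis unfolding M0 by auto
        next
          case False
          then have "sec g" using g unfolding M0 by blast
          then obtain c' \<delta>' where c': "c' > 0" "\<delta>' > 0" and n': "(\<lambda>x. g x + c' * (h x - e) - \<delta>') \<in> D"
            unfolding sec_def by blast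
          obtain c \<delta> where c: "c > 0" "\<delta> > 0" and n: "(\<lambda>x. f x + c * (h x - e) - \<delta>) \<in> D"
            using sf unfolding sec_def by blast
          have "(\<lambda>x. (f x + c * (h x - e) - \<delta>) + (g x + c' * (h x - e) - \<delta>')) \<in> D"
            by (rule cohD_add[OF coh n n'])
          moreover have "(\<lambda>x. (f x + c * (h x - e) - \<delta>) + (g x + c' * (h x - e) - \<delta>'))
              = (\<lambda>x. (f x + g x) + (c + c') * (h x - e) - (\<delta> + \<delta>'))"
            by (rule ext) (simp add: algebra_simps)
          ultimately have "sec (\<lambda>x. f x + g x)" unfolding sec_def using c c' gg
            by (intro conjI exI[of _ "c + c'"] exI[of _ "\<delta> + \<delta>'"]) simp_all
          then show ?thesis unfolding M0 by blast
        qed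
      qed
    qed
    show "f \<notin> M0" if le: "\<forall>x. f x \<le> 0" for f
    proof
      assume f: "f \<in> M0"
      have "f \<notin> D" by (rule cohD_notle[OF coh]) (use le in simp)
      then have "sec f" using f unfolding M0 by blast
      then obtain c \<delta> where c: "c > 0" "\<delta> > 0" and n: "(\<lambda>x. f x + c * (h x - e) - \<delta>) \<in> D"
        unfolding sec_def by blast
      have n': "(\<lambda>x. (1/c) * (f x + c * (h x - e) - \<delta>)) \<in> D" by (rule cohD_scale[OF coh n]) (use c in simp)
      have "(\<lambda>x. h x - (e + \<delta> / c)) \<in> D"
      proof (rule cohD_mono[OF coh n'])
        show "gamble (\<lambda>x. h x - (e + \<delta> / c))" by (intro gamble_diff h gamble_const)
        fix x
        have eq: "(1/c) * (f x + c * (h x - e) - \<delta>) = h x - (e + \<delta> / c) + f x / c"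
          using c by (simp add: field_simps)
        have "f x / c \<le> 0" using le c by (simp add: divide_nonpos_pos)
        then show "(1/c) * (f x + c * (h x - e) - \<delta>) \<le> h x - (e + \<delta> / c)" unfolding eq by simp
      qed
      moreover have "e + \<delta> / c > e" using c by simp
      ultimately show False using hi by blast
    qed
  qed
qed

lemma chain_union:
  assumes Cc: "C \<in> chains S" and ne: "C \<noteq> {}"
    and S: "S = {M. coherent_D M \<and> D \<subseteq> M \<and> (\<forall>\<delta>>0. (\<lambda>x. e - h x + \<delta>) \<in> M)}"
  shows "\<Union>C \<in> S"
proof -
  have CS: "C \<subseteq> S" using chainsD2[OF Cc] .
  have cohC: "coherent_D X" if "X \<in> C" for X using CS that S by blast
  obtain X0 where X0: "X0 \<in> C" using ne by blast
  have "coherent_D (\<Union>C)" unfolding coherent_D_def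
  proof (intro conjI allI impI ballI)
    show "\<Union>C \<subseteq> gambles" using cohC unfolding coherent_D_def by blast
    show "f \<in> \<Union>C" if "gamble f \<and> (\<forall>x. 0 \<le> f x) \<and> f \<noteq> (\<lambda>_. 0)" for f
      using cohD_pos[OF cohC[OF X0]] that X0 by blast
    show "(\<lambda>x. lam * f x) \<in> \<Union>C" if "f \<in> \<Union>C" "0 < lam" for f lam
      using cohD_scale[OF cohC] that by blast
    show "(\<lambda>x. f x + g x) \<in> \<Union>C" if f: "f \<in> \<Union>C" and g: "g \<in> \<Union>C" for f g
    proof -
      obtain X Y where XY: "X \<in> C" "Y \<in> C" "f \<in> X" "g \<in> Y" using f g by blast
      from chainsD[OF Cc XY(1,2)] show ?thesis
      proof
        assume "X \<subseteq> Y"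
        then show ?thesis using cohD_add[OF cohC[OF XY(2)]] XY by blast
      next
        assume "Y \<subseteq> X"
        then show ?thesis using cohD_add[OF cohC[OF XY(1)]] XY by blast
      qed
    qed
    show "f \<notin> \<Union>C" if "\<forall>x. f x \<le> 0" for f
      using cohD_notle[OF cohC] that by blast
  qed
  moreover have "D \<subseteq> \<Union>C" using X0 CS S by blast
  moreover have "\<forall>\<delta>>0. (\<lambda>x. e - h x + \<delta>) \<in> \<Union>C" using X0 CS S by blast
  ultimately show ?thesis using S by blast
qed



lemma ext_neg_coherent:
  assumes coh: "coherent_D M" and gf: "gamble f" and fM: "f \<notin> M" and nz: "f \<noteq> (\<lambda>_. 0)"
  defines "M' \<equiv> M \<union> {a. gamble a \<and> (\<exists>l>0. (\<lambda>x. a x + l * f x) \<in> insert (\<lambda>_. 0) M)}"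
  shows "coherent_D M'" "M \<subseteq> M'" "(\<lambda>x. - f x) \<in> M'"
proof -
  show "M \<subseteq> M'" unfolding M'_def by blast
  show "(\<lambda>x. - f x) \<in> M'"
  proof -
    have "(\<lambda>x. - f x + 1 * f x) = (\<lambda>_. 0)" by (rule ext) simp
    then show ?thesis unfolding M'_def using gamble_uminus[OF gf]
      by (intro UnI2 CollectI conjI exI[of _ "1::real"]) simp_all
  qed
  define sec where "sec a \<longleftrightarrow> gamble a \<and> (\<exists>l>0. (\<lambda>x. a x + l * f x) \<in> insert (\<lambda>_. 0) M)" for a
  have M': "M' = M \<union> {a. sec a}" unfolding M'_def sec_def by simp
  have gM: "gamble a" if "a \<in> M'" for a
    using that cohD_gamble[OF coh] unfolding M' sec_def by blast
  show "coherent_D M'" unfolding coherent_D_def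
  proof (intro conjI allI impI ballI)
    show "M' \<subseteq> gambles" using gM unfolding gambles_def by blast
    show "g \<in> M'" if "gamble g \<and> (\<forall>x. 0 \<le> g x) \<and> g \<noteq> (\<lambda>_. 0)" for g
      using cohD_pos[OF coh] that unfolding M' by blast
    show "(\<lambda>x. lam * g x) \<in> M'" if g: "g \<in> M'" and l: "0 < lam" for g lam
    proof (cases "g \<in> M")
      case True then show ?thesis using cohD_scale[OF coh True l] unfolding M' by blast
    next
      case False
      then have "sec g" using g unfolding M' by blast
      then obtain c where c: "c > 0" and n: "(\<lambda>x. g x + c * f x) \<in> insert (\<lambda>_. 0) M"
        and gg: "gamble g" unfolding sec_def by blast
      have "(\<lambda>x. lam * (g x + c * f x)) \<in> insert (\<lambda>_. 0) M" by (rule cohN_scale[OF coh n]) (use l in simp)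
      moreover have "(\<lambda>x. lam * (g x + c * f x)) = (\<lambda>x. lam * g x + (lam * c) * f x)"
        by (rule ext) (simp add: algebra_simps)
      ultimately have "sec (\<lambda>x. lam * g x)" unfolding sec_def using c l gamble_cmult[OF gg]
        by (intro conjI exI[of _ "lam * c"]) simp_all
      then show ?thesis unfolding M' by blast
    qed
    show "(\<lambda>x. g x + k x) \<in> M'" if g: "g \<in> M'" and k: "k \<in> M'" for g k
    proof -
      have gg: "gamble (\<lambda>x. g x + k x)" by (rule gamble_add[OF gM[OF g] gM[OF k]])
      have secD: "sec (\<lambda>x. a x + b x)" if aD: "a \<in> M" and sb: "sec b" for a b
      proof -
        obtain c where c: "c > 0" and n: "(\<lambda>x. b x + c * f x) \<in> insert (\<lambda>_. 0) M"
          and gb: "gamble b" using sb unfolding sec_def by blast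
        have "(\<lambda>x. a x + (b x + c * f x)) \<in> M" by (rule cohN_D_add[OF coh aD n])
        moreover have "(\<lambda>x. a x + (b x + c * f x)) = (\<lambda>x. (a x + b x) + c * f x)"
          by (rule ext) (simp add: algebra_simps)
        ultimately show ?thesis unfolding sec_def using c gamble_add[OF cohD_gamble[OF coh aD] gb]
          by (intro conjI exI[of _ c]) simp_all
      qed
      show ?thesis
      proof (cases "g \<in> M")
        case gD: True
        show ?thesis
        proof (cases "k \<in> M")
          case True then show ?thesis using cohD_add[OF coh gD True] unfolding M' by blast
        next
          case False
          then have "sec k" using k unfolding M' by blast
          then show ?thesis using secD[OF gD] unfolding M' by blast
        qed
      next
        case gnD: False
        then have sg: "sec g" using g unfolding M' by blast
        show ?thesis
        proof (cases "k \<in> M")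
          case True
          have "sec (\<lambda>x. k x + g x)" by (rule secD[OF True sg])
          moreover have "(\<lambda>x. k x + g x) = (\<lambda>x. g x + k x)" by (rule ext) simp
          ultimately show ?thesis unfolding M' by auto
        next
          case False
          then have "sec k" using k unfolding M' by blast
          then obtain c' where c': "c' > 0" and n': "(\<lambda>x. k x + c' * f x) \<in> insert (\<lambda>_. 0) M"
            unfolding sec_def by blast
          obtain c where c: "c > 0" and n: "(\<lambda>x. g x + c * f x) \<in> insert (\<lambda>_. 0) M"
            using sg unfolding sec_def by blast
          have "(\<lambda>x. (g x + c * f x) + (k x + c' * f x)) \<in> insert (\<lambda>_. 0) M"
            by (rule cohN_add[OF coh n n'])
          moreover have "(\<lambda>x. (g x + c * f x) + (k x + c' * f x))
              = (\<lambda>x. (g x + k x) + (c + c') * f x)"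
            by (rule ext) (simp add: algebra_simps)
          ultimately have "sec (\<lambda>x. g x + k x)" unfolding sec_def using c c' gg
            by (intro conjI exI[of _ "c + c'"]) simp_all
          then show ?thesis unfolding M' by blast
        qed
      qed
    qed
    show "g \<notin> M'" if le: "\<forall>x. g x \<le> 0" for g
    proof
      assume g: "g \<in> M'"
      have "g \<notin> M" by (rule cohD_notle[OF coh]) (use le in simp)
      then have "sec g" using g unfolding M' by blast
      then obtain c where c: "c > 0" and n: "(\<lambda>x. g x + c * f x) \<in> insert (\<lambda>_. 0) M"
        unfolding sec_def by blast
      show False
      proof (cases "(\<lambda>x. g x + c * f x) = (\<lambda>_. 0)")
        case True
        have fx: "f x = - g x / c" for x
          using fun_cong[OF True, of x] c by (simp add: field_simps)
        have "f \<in> M"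
        proof (rule cohD_pos[OF coh gf _ nz])
          fix x show "f x \<ge> 0" unfolding fx using le[rule_format, of x] c by (simp add: divide_nonpos_pos)
        qed
        then show False using fM by blast
      next
        case False
        then have nM: "(\<lambda>x. g x + c * f x) \<in> M" using n by blast
        have n': "(\<lambda>x. (1/c) * (g x + c * f x)) \<in> M" by (rule cohD_scale[OF coh nM]) (use c in simp)
        have "f \<in> M"
        proof (rule cohD_mono[OF coh n' gf])
          fix x
          have eq: "(1/c) * (g x + c * f x) = f x + g x / c" using c by (simp add: field_simps)
          have "g x / c \<le> 0" using le[rule_format, of x] c by (simp add: divide_nonpos_pos)
          then show "(1/c) * (g x + c * f x) \<le> f x" unfolding eq by simp
        qed
        then show False using fM by blast
      qed
    qed
  qed
qed

lemma exists_Q: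
  assumes coh: "coherent_D D" and h: "gamble h"
    and lo: "\<And>\<nu>. \<nu> < e \<Longrightarrow> (\<lambda>x. h x - \<nu>) \<in> D" and hi: "\<And>\<nu>. \<nu> > e \<Longrightarrow> (\<lambda>x. h x - \<nu>) \<notin> D"
  obtains M where "maxcoh M" "D \<subseteq> M" "Qf M h = e"
proof -
  define S where "S = {M. coherent_D M \<and> D \<subseteq> M \<and> (\<forall>\<delta>>0. (\<lambda>x. e - h x + \<delta>) \<in> M)}"
  have hi': "\<And>\<nu>. e < \<nu> \<Longrightarrow> (\<lambda>x. h x - \<nu>) \<notin> D" using hi by blast
  note M0 = M0_in[where e=e and D=D and h=h, OF coh h hi']
  define M0 where "M0 = D \<union> {a. gamble a \<and> (\<exists>c>0. \<exists>\<delta>>0. (\<lambda>x. a x + c * (h x - e) - \<delta>) \<in> D)}"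
  have M0S: "M0 \<in> S"
  proof -
    have "coherent_D M0" unfolding M0_def by (rule M0(1)) auto
    moreover have "D \<subseteq> M0" unfolding M0_def by (rule M0(2)) auto
    moreover have "(\<lambda>x. e - h x + \<delta>) \<in> M0" if "\<delta> > 0" for \<delta> unfolding M0_def by (rule M0(3)) (use that in auto)
    ultimately show ?thesis unfolding S_def by blast
  qed
  have "\<forall>C\<in>chains S. \<exists>U\<in>S. \<forall>X\<in>C. X \<subseteq> U"
  proof
    fix C assume C: "C \<in> chains S"
    show "\<exists>U\<in>S. \<forall>X\<in>C. X \<subseteq> U"
    proof (cases "C = {}")
      case True
      show ?thesis using M0S True by blast
    next
      case False
      have "\<Union>C \<in> S" by (rule chain_union[OF C False S_def])
      then show ?thesis by blast
    qed
  qed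
  from Zorn_Lemma2[OF this] obtain M where MS: "M \<in> S" and maxM: "\<forall>X\<in>S. M \<subseteq> X \<longrightarrow> X = M"
    by blast
  have cohM: "coherent_D M" and DM: "D \<subseteq> M" and eM: "\<And>\<delta>. \<delta> > 0 \<Longrightarrow> (\<lambda>x. e - h x + \<delta>) \<in> M"
    using MS unfolding S_def by blast+
  have mc: "maxcoh M"
  proof (unfold_locales)
    show "coherent_D M" by (rule cohM)
    fix f assume gf: "gamble f" and fM: "f \<notin> M" and nz: "f \<noteq> (\<lambda>_. 0)"
    note N = ext_neg_coherent[OF cohM gf fM nz]
    define M' where "M' = M \<union> {a. gamble a \<and> (\<exists>l>0. (\<lambda>x. a x + l * f x) \<in> insert (\<lambda>_. 0) M)}"
    have c1: "coherent_D M'" unfolding M'_def by (rule N(1))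
    have c2: "M \<subseteq> M'" unfolding M'_def by (rule N(2))
    have "M' \<in> S" unfolding S_def using c1 c2 DM eM by blast
    moreover have "M \<subseteq> M'" unfolding M'_def by blast
    ultimately have "M' = M" using maxM by blast
    moreover have "(\<lambda>x. - f x) \<in> M'" unfolding M'_def by (rule N(3))
    ultimately show "(\<lambda>x. - f x) \<in> M" by simp
  qed
  have "Qf M h = e"
  proof (rule maxcoh.Q_char[OF mc h])
    show "(\<lambda>x. h x - \<nu>) \<in> M" if "\<nu> < e" for \<nu> using lo[OF that] DM by blast
    show "(\<lambda>x. \<nu> - h x) \<in> M" if "\<nu> > e" for \<nu>
    proof -
      have "(\<lambda>x. e - h x + (\<nu> - e)) \<in> M" by (rule eM) (use that in simp)
      moreover have "(\<lambda>x. e - h x + (\<nu> - e)) = (\<lambda>x. \<nu> - h x)" by (rule ext) simp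
      ultimately show ?thesis by simp
    qed
  qed
  then show ?thesis using that mc DM by blast
qed



lemma posiN_add: "a \<in> insert (\<lambda>_. 0) (posi X) \<Longrightarrow> b \<in> insert (\<lambda>_. 0) (posi X)
   \<Longrightarrow> (\<lambda>x. a x + b x) \<in> insert (\<lambda>_. 0) (posi X)"
  using posi_add[of a X b] by auto

lemma posiN_scale: assumes "a \<in> insert (\<lambda>_. 0) (posi X)" "c \<ge> 0"
  shows "(\<lambda>x. c * a x) \<in> insert (\<lambda>_. 0) (posi X)"
proof (cases "c = 0 \<or> a = (\<lambda>_. 0)")
  case True then show ?thesis by auto
next
  case False then show ?thesis using assms posi_scale[of a X c] by simp
qed

lemma posiN_add2: "a \<in> posi X \<Longrightarrow> b \<in> insert (\<lambda>_. 0) (posi X)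
   \<Longrightarrow> (\<lambda>x. a x + b x) \<in> posi X"
  using posi_add[of a X b] by auto

lemma gamble_sec: "gamble \<psi> \<Longrightarrow> gamble (\<lambda>y. \<psi> (x, y))"
  unfolding gamble_def by blast

lemma gamble_sec2: "gamble \<psi> \<Longrightarrow> gamble (\<lambda>y. \<psi> (y, x))"
  unfolding gamble_def by blast

lemma gamble_fst: "gamble f \<Longrightarrow> gamble (\<lambda>(x1, x2). f x1)"
  unfolding gamble_def by auto

lemma gamble_snd: "gamble f \<Longrightarrow> gamble (\<lambda>(x1, x2). f x2)"
  unfolding gamble_def by auto

lemma PD_A12: assumes "f2 \<in> D2" "B \<in> \<B>1 \<union> {UNIV}"
  shows "(\<lambda>(x1, x2). f2 x2 * indicator B x1) \<in> prod_D D1 \<B>1 D2 \<B>2"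
  unfolding prod_D_def Ext_def by (rule posi_sing) (use assms in blast)

lemma PD_A21: assumes "f1 \<in> D1" "B \<in> \<B>2 \<union> {UNIV}"
  shows "(\<lambda>(x1, x2). f1 x1 * indicator B x2) \<in> prod_D D1 \<B>1 D2 \<B>2"
  unfolding prod_D_def Ext_def by (rule posi_sing) (use assms in blast)

lemma prod_D_swap:
  assumes "\<phi> \<in> prod_D D1 \<B>1 D2 \<B>2"
  shows "(\<lambda>(y1, y2). \<phi> (y2, y1)) \<in> prod_D D2 \<B>2 D1 \<B>1"
  using assms[unfolded prod_D_def Ext_def]
proof (rule posi_induct[where R="\<lambda>\<phi>. (\<lambda>(y1, y2). \<phi> (y2, y1)) \<in> prod_D D2 \<B>2 D1 \<B>1"])
  fix x assume x: "x \<in> {(\<lambda>(x1, x2). f2 x2 * indicator B1 x1) |f2 B1. f2 \<in> D2 \<and> B1 \<in> \<B>1 \<union> {UNIV}} \<union>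
             {(\<lambda>(x1, x2). f1 x1 * indicator B2 x2) |f1 B2. f1 \<in> D1 \<and> B2 \<in> \<B>2 \<union> {UNIV}} \<union>
             pos_gambles"
  show "(\<lambda>(y1, y2). x (y2, y1)) \<in> prod_D D2 \<B>2 D1 \<B>1"
  proof -
    { assume "x \<in> {(\<lambda>(x1, x2). f2 x2 * indicator B1 x1) |f2 B1. f2 \<in> D2 \<and> B1 \<in> \<B>1 \<union> {UNIV}}"
      then obtain f2 B where fB: "f2 \<in> D2" "B \<in> \<B>1 \<union> {UNIV}" and xe: "x = (\<lambda>(x1, x2). f2 x2 * indicator B x1)"
        by blast
      have "(\<lambda>(y1, y2). x (y2, y1)) = (\<lambda>(x1, x2). f2 x1 * indicator B x2)" unfolding xe by auto
      moreover have "(\<lambda>(x1, x2). f2 x1 * indicator B x2) \<in> prod_D D2 \<B>2 D1 \<B>1" by (rule PD_A21[OF fB])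
      ultimately have ?thesis by simp }
    moreover
    { assume "x \<in> {(\<lambda>(x1, x2). f1 x1 * indicator B2 x2) |f1 B2. f1 \<in> D1 \<and> B2 \<in> \<B>2 \<union> {UNIV}}"
      then obtain f1 B where fB: "f1 \<in> D1" "B \<in> \<B>2 \<union> {UNIV}" and xe: "x = (\<lambda>(x1, x2). f1 x1 * indicator B x2)"
        by blast
      have "(\<lambda>(y1, y2). x (y2, y1)) = (\<lambda>(x1, x2). f1 x2 * indicator B x1)" unfolding xe by auto
      moreover have "(\<lambda>(x1, x2). f1 x2 * indicator B x1) \<in> prod_D D2 \<B>2 D1 \<B>1" by (rule PD_A12[OF fB])
      ultimately have ?thesis by simp }
    moreover
    { assume xp: "x \<in> pos_gambles"
      have "gamble x" "\<And>p. x p \<ge> 0" "x \<noteq> (\<lambda>_. 0)" using xp unfolding pos_gambles_def by auto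
      then obtain Mx where Mx: "\<And>p. \<bar>x p\<bar> \<le> Mx" using gambleE by metis
      have g: "gamble (\<lambda>(y1, y2). x (y2, y1))" by (rule gambleI[of _ Mx]) (simp add: case_prod_beta Mx)
      have nn: "\<forall>p. (\<lambda>(y1, y2). x (y2, y1)) p \<ge> 0" using \<open>\<And>p. x p \<ge> 0\<close> by (simp add: case_prod_beta)
      have nz: "(\<lambda>(y1, y2). x (y2, y1)) \<noteq> (\<lambda>_. 0)"
      proof
        assume eq: "(\<lambda>(y1, y2). x (y2, y1)) = (\<lambda>_. 0)"
        have "x p = 0" for p using fun_cong[OF eq, of "(snd p, fst p)"] by (simp add: case_prod_beta)
        then show False using \<open>x \<noteq> (\<lambda>_. 0)\<close> by auto
      qed
      have "(\<lambda>(y1, y2). x (y2, y1)) \<in> pos_gambles" unfolding pos_gambles_def using g nn nz by blast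
      then have ?thesis unfolding prod_D_def Ext_def by (intro posi_sing) simp }
    ultimately show ?thesis using x by blast
  qed
next
  fix b and c :: real assume "(\<lambda>(y1, y2). b (y2, y1)) \<in> prod_D D2 \<B>2 D1 \<B>1" "c > 0"
  from posi_scale[OF this[unfolded prod_D_def Ext_def]]
  have "(\<lambda>x. c * (\<lambda>(y1, y2). b (y2, y1)) x) \<in> prod_D D2 \<B>2 D1 \<B>1"
    unfolding prod_D_def Ext_def .
  moreover have "(\<lambda>x. c * (\<lambda>(y1, y2). b (y2, y1)) x) = (\<lambda>(y1, y2). (\<lambda>x. c * b x) (y2, y1))"
    by (rule ext) (simp add: case_prod_beta)
  ultimately show "(\<lambda>(y1, y2). (\<lambda>x. c * b x) (y2, y1)) \<in> prod_D D2 \<B>2 D1 \<B>1" by simp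
next
  fix b b' assume "(\<lambda>(y1, y2). b (y2, y1)) \<in> prod_D D2 \<B>2 D1 \<B>1"
    "(\<lambda>(y1, y2). b' (y2, y1)) \<in> prod_D D2 \<B>2 D1 \<B>1"
  from posi_add[OF this[unfolded prod_D_def Ext_def]]
  have "(\<lambda>x. (\<lambda>(y1, y2). b (y2, y1)) x + (\<lambda>(y1, y2). b' (y2, y1)) x) \<in> prod_D D2 \<B>2 D1 \<B>1"
    unfolding prod_D_def Ext_def .
  moreover have "(\<lambda>x. (\<lambda>(y1, y2). b (y2, y1)) x + (\<lambda>(y1, y2). b' (y2, y1)) x) = (\<lambda>(y1, y2). (\<lambda>x. b x + b' x) (y2, y1))"
    by (rule ext) (simp add: case_prod_beta)
  ultimately show "(\<lambda>(y1, y2). (\<lambda>x. b x + b' x) (y2, y1)) \<in> prod_D D2 \<B>2 D1 \<B>1" by simp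
qed

lemma lowprev_swap:
  "lowprev_D (prod_D D1 \<B>1 D2 \<B>2) \<phi> UNIV = lowprev_D (prod_D D2 \<B>2 D1 \<B>1) (\<lambda>(y1, y2). \<phi> (y2, y1)) UNIV"
proof -
  have "{\<mu>. (\<lambda>x. \<phi> x - \<mu>) \<in> prod_D D1 \<B>1 D2 \<B>2}
      = {\<mu>. (\<lambda>x. (\<lambda>(y1, y2). \<phi> (y2, y1)) x - \<mu>) \<in> prod_D D2 \<B>2 D1 \<B>1}"
  proof safe
    fix \<mu> assume "(\<lambda>x. \<phi> x - \<mu>) \<in> prod_D D1 \<B>1 D2 \<B>2"
    from prod_D_swap[OF this] have "(\<lambda>(y1, y2). (\<lambda>x. \<phi> x - \<mu>) (y2, y1)) \<in> prod_D D2 \<B>2 D1 \<B>1" .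
    moreover have "(\<lambda>(y1, y2). (\<lambda>x. \<phi> x - \<mu>) (y2, y1)) = (\<lambda>x. (\<lambda>(y1, y2). \<phi> (y2, y1)) x - \<mu>)"
      by (rule ext) (simp add: case_prod_beta)
    ultimately show "(\<lambda>x. (\<lambda>(y1, y2). \<phi> (y2, y1)) x - \<mu>) \<in> prod_D D2 \<B>2 D1 \<B>1" by simp
  next
    fix \<mu> assume "(\<lambda>x. (\<lambda>(y1, y2). \<phi> (y2, y1)) x - \<mu>) \<in> prod_D D2 \<B>2 D1 \<B>1"
    from prod_D_swap[OF this] have "(\<lambda>(y1, y2). (\<lambda>x. (\<lambda>(y1, y2). \<phi> (y2, y1)) x - \<mu>) (y2, y1)) \<in> prod_D D1 \<B>1 D2 \<B>2" .
    moreover have "(\<lambda>(y1, y2). (\<lambda>x. (\<lambda>(y1, y2). \<phi> (y2, y1)) x - \<mu>) (y2, y1)) = (\<lambda>x. \<phi> x - \<mu>)"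
      by (rule ext) (simp add: case_prod_beta)
    ultimately show "(\<lambda>x. \<phi> x - \<mu>) \<in> prod_D D1 \<B>1 D2 \<B>2" by simp
  qed
  then show ?thesis unfolding lowprev_UNIV by simp
qed

lemma sup_eps:
  assumes "\<And>a \<epsilon>. a \<in> A \<Longrightarrow> \<epsilon> > 0 \<Longrightarrow> a - \<epsilon> \<in> B"
  shows "Sup (ereal ` A) \<le> Sup (ereal ` B)"
proof (rule Sup_least)
  fix x assume "x \<in> ereal ` A"
  then obtain a where a: "a \<in> A" "x = ereal a" by blast
  show "x \<le> Sup (ereal ` B)" unfolding a(2)
  proof (rule ereal_le_epsilon2)
    fix \<epsilon> :: real assume e: "\<epsilon> > 0"
    have "ereal (a - \<epsilon>) \<le> Sup (ereal ` B)" using assms[OF a(1) e] by (intro Sup_upper) auto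
    then have "ereal (a - \<epsilon>) + ereal \<epsilon> \<le> Sup (ereal ` B) + ereal \<epsilon>" by (rule add_right_mono)
    then show "ereal a \<le> Sup (ereal ` B) + ereal \<epsilon>" by simp
  qed
qed



lemma gamble_tensor: assumes "gamble a" "gamble b" shows "gamble (\<lambda>(x1, x2). a x1 * b x2)"
proof -
  have "gamble (\<lambda>p. a (fst p) * b (snd p))"
    by (rule gamble_mult) (use assms gamble_comp in auto)
  then show ?thesis by (simp add: case_prod_beta')
qed

lemma gamble_tensor2: assumes "gamble a" "gamble b" shows "gamble (\<lambda>(x1, x2). a x2 * b x1)"
proof -
  have "gamble (\<lambda>p. a (snd p) * b (fst p))"
    by (rule gamble_mult) (use assms gamble_comp in auto)
  then show ?thesis by (simp add: case_prod_beta')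
qed

lemma dir2:
  fixes D1 :: "('a \<Rightarrow> real) set" and D2 :: "('b \<Rightarrow> real) set"
  assumes c1: "coherent_D D1" and c2: "coherent_D D2" and f: "gamble f" and h: "gamble h" and gg: "gamble g"
    and lo: "\<And>\<nu>. \<nu> < e \<Longrightarrow> (\<lambda>x. h x - \<nu>) \<in> D2" and hi: "\<And>\<nu>. \<nu> > e \<Longrightarrow> (\<lambda>x. h x - \<nu>) \<notin> D2"
    and mem: "(\<lambda>p. (\<lambda>(x1, x2). f x1 + g x1 * h x2) p - a) \<in> prod_D D1 \<B>1 D2 \<B>2"
    and eps: "\<epsilon> > 0"
  shows "(\<lambda>x1. (f x1 + g x1 * e) - (a - \<epsilon>)) \<in> D1"
proof -
  obtain M where mc: "maxcoh M" and DM: "D2 \<subseteq> M" and Qh: "Qf M h = e"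
    using exists_Q[OF c2 h lo hi] by blast
  note Qadd = maxcoh.Q_add[OF mc] and Qscale = maxcoh.Q_scale[OF mc]
    and Qconst = maxcoh.Q_const[OF mc] and QM = maxcoh.Q_M[OF mc] and Qnn = maxcoh.Q_nonneg[OF mc]
  define R where "R \<psi> \<longleftrightarrow> gamble \<psi> \<and> (\<exists>V \<in> insert (\<lambda>_. 0) D1. \<forall>x1. V x1 \<le> Qf M (\<lambda>x2. \<psi> (x1, x2)))"
    for \<psi> :: "'a \<times> 'b \<Rightarrow> real"
  have RPD: "R \<psi>" if "\<psi> \<in> prod_D D1 \<B>1 D2 \<B>2" for \<psi>
    using that[unfolded prod_D_def Ext_def]
  proof (rule posi_induct[where R=R])
    fix x assume x: "x \<in> {(\<lambda>(x1, x2). f2 x2 * indicator B1 x1) |f2 B1. f2 \<in> D2 \<and> B1 \<in> \<B>1 \<union> {UNIV}} \<union>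
             {(\<lambda>(x1, x2). f1 x1 * indicator B2 x2) |f1 B2. f1 \<in> D1 \<and> B2 \<in> \<B>2 \<union> {UNIV}} \<union>
             pos_gambles"
    { assume "x \<in> {(\<lambda>(x1, x2). f2 x2 * indicator B1 x1) |f2 B1. f2 \<in> D2 \<and> B1 \<in> \<B>1 \<union> {UNIV}}"
      then obtain f2 B where fB: "f2 \<in> D2" and xe: "x = (\<lambda>(x1, x2). f2 x2 * indicator B x1)"
        by blast
      have gf2: "gamble f2" by (rule cohD_gamble[OF c2 fB])
      have "gamble x" unfolding xe
        by (rule gamble_tensor2[OF gf2 gamble_indicator])
      moreover have "0 \<le> Qf M (\<lambda>x2. x (x1, x2))" for x1
      proof -
        have "(\<lambda>x2. x (x1, x2)) = (\<lambda>x2. indicator B x1 * f2 x2)" unfolding xe by (rule ext) simp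
        moreover have "Qf M (\<lambda>x2. indicator B x1 * f2 x2) = indicator B x1 * Qf M f2" by (rule Qscale[OF gf2])
        moreover have "Qf M f2 \<ge> 0" using QM DM fB by blast
        ultimately show ?thesis by (simp split: split_indicator)
      qed
      ultimately have "R x" unfolding R_def by (intro conjI bexI[of _ "\<lambda>_. 0"]) auto }
    moreover
    { assume "x \<in> {(\<lambda>(x1, x2). f1 x1 * indicator B2 x2) |f1 B2. f1 \<in> D1 \<and> B2 \<in> \<B>2 \<union> {UNIV}}"
      then obtain f1 B where fB: "f1 \<in> D1" and xe: "x = (\<lambda>(x1, x2). f1 x1 * indicator B x2)"
        by blast
      have gf1: "gamble f1" by (rule cohD_gamble[OF c1 fB])
      have "gamble x" unfolding xe
        by (rule gamble_tensor[OF gf1 gamble_indicator])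
      moreover have "(\<lambda>x1. Qf M (indicator B) * f1 x1) \<in> insert (\<lambda>_. 0) D1"
        by (rule cohN_scale[OF c1]) (use fB Qnn in auto)
      moreover have "Qf M (indicator B) * f1 x1 \<le> Qf M (\<lambda>x2. x (x1, x2))" for x1
      proof -
        have "(\<lambda>x2. x (x1, x2)) = (\<lambda>x2. f1 x1 * indicator B x2)" unfolding xe by (rule ext) simp
        moreover have "Qf M (\<lambda>x2. f1 x1 * indicator B x2) = f1 x1 * Qf M (indicator B)"
          by (rule Qscale) simp
        ultimately show ?thesis by simp
      qed
      ultimately have "R x" unfolding R_def by (intro conjI bexI[of _ "\<lambda>x1. Qf M (indicator B) * f1 x1"] allI) auto }
    moreover
    { assume xp: "x \<in> pos_gambles"
      then have gx: "gamble x" and nn: "\<And>p. x p \<ge> 0" unfolding pos_gambles_def by auto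
      have "0 \<le> Qf M (\<lambda>x2. x (x1, x2))" for x1
        by (rule Qnn) (use gamble_sec[OF gx] nn in auto)
      then have "R x" unfolding R_def using gx by (intro conjI bexI[of _ "\<lambda>_. 0"]) auto }
    ultimately show "R x" using x by blast
  next
    fix b and c :: real assume Rb: "R b" and c: "c > 0"
    then obtain V where gb: "gamble b" and V: "V \<in> insert (\<lambda>_. 0) D1" "\<And>x1. V x1 \<le> Qf M (\<lambda>x2. b (x1, x2))"
      unfolding R_def by blast
    have "gamble (\<lambda>x. c * b x)" by (rule gamble_cmult[OF gb])
    moreover have "(\<lambda>x1. c * V x1) \<in> insert (\<lambda>_. 0) D1" by (rule cohN_scale[OF c1 V(1)]) (use c in simp)
    moreover have "c * V x1 \<le> Qf M (\<lambda>x2. c * b (x1, x2))" for x1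
      using Qscale[OF gamble_sec[OF gb], of c x1] V(2)[of x1] c by simp
    ultimately show "R (\<lambda>x. c * b x)" unfolding R_def by (intro conjI bexI[of _ "\<lambda>x1. c * V x1"] allI) auto
  next
    fix b b' assume "R b" "R b'"
    then obtain V V' where gb: "gamble b" and V: "V \<in> insert (\<lambda>_. 0) D1" "\<And>x1. V x1 \<le> Qf M (\<lambda>x2. b (x1, x2))"
      and gb': "gamble b'" and V': "V' \<in> insert (\<lambda>_. 0) D1" "\<And>x1. V' x1 \<le> Qf M (\<lambda>x2. b' (x1, x2))"
      unfolding R_def by blast
    have "gamble (\<lambda>x. b x + b' x)" by (rule gamble_add[OF gb gb'])
    moreover have "(\<lambda>x1. V x1 + V' x1) \<in> insert (\<lambda>_. 0) D1" by (rule cohN_add[OF c1 V(1) V'(1)])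
    moreover have "V x1 + V' x1 \<le> Qf M (\<lambda>x2. b (x1, x2) + b' (x1, x2))" for x1
      using Qadd[OF gamble_sec[OF gb] gamble_sec[OF gb'], of x1] V(2)[of x1] V'(2)[of x1] by simp
    ultimately show "R (\<lambda>x. b x + b' x)" unfolding R_def by (intro conjI bexI[of _ "\<lambda>x1. V x1 + V' x1"] allI) auto
  qed
  from RPD[OF mem] obtain V where V: "V \<in> insert (\<lambda>_. 0) D1"
    "\<And>x1. V x1 \<le> Qf M (\<lambda>x2. (\<lambda>p. (\<lambda>(x1, x2). f x1 + g x1 * h x2) p - a) (x1, x2))"
    unfolding R_def by blast
  have sec: "Qf M (\<lambda>x2. (\<lambda>p. (\<lambda>(x1, x2). f x1 + g x1 * h x2) p - a) (x1, x2)) = f x1 + g x1 * e - a" for x1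
  proof -
    have "(\<lambda>x2. (\<lambda>p. (\<lambda>(x1, x2). f x1 + g x1 * h x2) p - a) (x1, x2)) = (\<lambda>x2. (f x1 - a) + g x1 * h x2)"
      by (rule ext) simp
    moreover have "Qf M (\<lambda>x2. (f x1 - a) + g x1 * h x2) = Qf M (\<lambda>x2. f x1 - a) + Qf M (\<lambda>x2. g x1 * h x2)"
      by (rule Qadd) (simp_all add: gamble_cmult h)
    moreover have "Qf M (\<lambda>x2. g x1 * h x2) = g x1 * e" using Qscale[OF h, of "g x1"] Qh by simp
    ultimately show ?thesis using Qconst by simp
  qed
  have le: "V x1 \<le> f x1 + g x1 * e - a" for x1 using V(2)[of x1] sec[of x1] by simp
  have "(\<lambda>x1. \<epsilon> + V x1) \<in> D1"
    using cohN_D_add[OF c1 cohD_const[OF c1 eps] V(1)] by simp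
  moreover have "gamble (\<lambda>x1. (f x1 + g x1 * e) - (a - \<epsilon>))"
    by (intro gamble_diff gamble_add gamble_mult f gg gamble_const)
  moreover have "\<epsilon> + V x1 \<le> (f x1 + g x1 * e) - (a - \<epsilon>)" for x1 using le[of x1] by simp
  ultimately show ?thesis by (rule cohD_mono[OF c1])
qed



lemma gamble_tensor_plus: assumes "gamble a" "gamble b" "gamble c"
  shows "gamble (\<lambda>(x1, x2). a x1 * b x2 + c x1)"
proof -
  have "gamble (\<lambda>p. a (fst p) * b (snd p) + c (fst p))"
    by (intro gamble_add gamble_mult) (use assms gamble_comp in auto)
  then show ?thesis by (simp add: case_prod_beta')
qed

lemma simple_gamble: assumes "simple_meas \<B> s" shows "gamble s"
proof -
  obtain n c B where s: "s = (\<lambda>x. c 0 + (\<Sum>k=1..(n::nat). c k * indicator (B k) x))"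
    using assms unfolding simple_meas_def by blast
  show ?thesis unfolding s
    by (intro gamble_add gamble_const gamble_sum gamble_cmult gamble_indicator)
qed

lemma posi_mono_pos:
  assumes "pos_gambles \<subseteq> X" "a \<in> posi X" "\<And>x. a x \<le> b x" "gamble (\<lambda>x. b x - a x)"
  shows "b \<in> posi X"
proof -
  have "(\<lambda>x. b x - a x) \<in> insert (\<lambda>_. 0) (posi X)"
  proof (cases "(\<lambda>x. b x - a x) = (\<lambda>_. 0)")
    case False
    then have "(\<lambda>x. b x - a x) \<in> pos_gambles" unfolding pos_gambles_def using assms(3,4) by simp
    then show ?thesis using assms(1) posi_sing by blast
  qed simp
  from posiN_add2[OF assms(2) this] show ?thesis by simp
qed

lemma dir1:
  fixes D1 :: "('a \<Rightarrow> real) set" and D2 :: "('b \<Rightarrow> real) set"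
  assumes c1: "coherent_D D1" and c2: "coherent_D D2" and f: "gamble f" and h: "gamble h"
    and g: "meas \<B>1 g"
    and lo: "\<And>\<nu>. \<nu> < e \<Longrightarrow> (\<lambda>x. h x - \<nu>) \<in> D2"
    and mem: "(\<lambda>x1. (f x1 + g x1 * e) - a) \<in> D1"
    and eps: "\<epsilon> > 0"
  shows "(\<lambda>p. (\<lambda>(x1, x2). f x1 + g x1 * h x2) p - (a - \<epsilon>)) \<in> prod_D D1 \<B>1 D2 \<B>2"
proof -
  define PX where "PX = {(\<lambda>(x1, x2). f2 x2 * indicator B1 x1) |f2 B1. f2 \<in> D2 \<and> B1 \<in> \<B>1 \<union> {UNIV}} \<union>
             {(\<lambda>(x1, x2). f1 x1 * indicator B2 x2) |f1 B2. f1 \<in> D1 \<and> B2 \<in> \<B>2 \<union> {UNIV}} \<union>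
             (pos_gambles :: ('a \<times> 'b \<Rightarrow> real) set)"
  have PDeq: "prod_D D1 \<B>1 D2 \<B>2 = posi PX" unfolding prod_D_def Ext_def PX_def by simp
  have gg: "gamble g" and gnn: "\<And>x. g x \<ge> 0" using g unfolding meas_def nonneg_gambles_def by auto
  obtain gs where gs: "\<And>n. simple_meas \<B>1 (gs n)" and lim: "(\<lambda>n. SUP x. \<bar>g x - gs n x\<bar>) \<longlonglongrightarrow> 0"
    using g unfolding meas_def by blast
  obtain G where G: "\<And>x. \<bar>g x\<bar> \<le> G" "G \<ge> 0" using gambleE[OF gg] by blast
  obtain K where K: "\<And>x. \<bar>h x - e\<bar> \<le> K" "K \<ge> 0" using gambleE[OF gamble_diff[OF h gamble_const]] by blast
  define \<delta> where "\<delta> = \<epsilon> / (4 * (G + 1))"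
  define \<eta> where "\<eta> = min 1 (\<epsilon> / (4 * (K + 1)))"
  have \<delta>pos: "\<delta> > 0" unfolding \<delta>_def using eps G by simp
  have \<eta>pos: "\<eta> > 0" unfolding \<eta>_def using eps K by simp
  have "\<forall>\<^sub>F n in sequentially. (SUP x. \<bar>g x - gs n x\<bar>) < \<eta>"
    using order_tendstoD(2)[OF lim \<eta>pos] .
  then obtain n where n: "(SUP x. \<bar>g x - gs n x\<bar>) < \<eta>" unfolding eventually_sequentially by blast
  define s where "s = gs n"
  have gsn: "gamble s" unfolding s_def by (rule simple_gamble[OF gs])
  have close: "\<bar>g x - s x\<bar> < \<eta>" for x
  proof -
    obtain Kd where Kd: "\<And>x. \<bar>g x - s x\<bar> \<le> Kd" using gambleE[OF gamble_diff[OF gg gsn]] by blast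
    have "bdd_above (range (\<lambda>x. \<bar>g x - gs n x\<bar>))" unfolding bdd_above_def s_def[symmetric]
      using Kd by blast
    then have "\<bar>g x - gs n x\<bar> \<le> (SUP x. \<bar>g x - gs n x\<bar>)" by (rule cSUP_upper[rotated]) simp
    then show ?thesis using n unfolding s_def by simp
  qed
  obtain m c B where cnn: "\<forall>k \<le> (m::nat). c k \<ge> (0::real)" and BB: "\<forall>k \<in> {1..m}. B k \<in> \<B>1"
    and seq: "s = (\<lambda>x. c 0 + (\<Sum>k=1..m. c k * indicator (B k) x))"
    using gs[of n] unfolding simple_meas_def s_def by blast
  define w where "w = (\<lambda>x2. h x2 - (e - \<delta>))"
  have wD: "w \<in> D2" unfolding w_def by (rule lo) (use \<delta>pos in simp)
  have trm: "(\<lambda>(x1, x2). w x2 * indicator Bk x1) \<in> posi PX" if "Bk \<in> \<B>1 \<union> {UNIV}" for Bk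
    unfolding PDeq[symmetric] by (rule PD_A12[OF wD that])
  have sumN: "(\<lambda>(x1, x2). \<Sum>k=1..j. c k * (w x2 * indicator (B k) x1)) \<in> insert (\<lambda>_. 0) (posi PX)"
    if "j \<le> m" for j
    using that
  proof (induction j)
    case 0 then show ?case by simp
  next
    case (Suc j)
    have IH: "(\<lambda>(x1, x2). \<Sum>k=1..j. c k * (w x2 * indicator (B k) x1)) \<in> insert (\<lambda>_. 0) (posi PX)"
      using Suc by simp
    have "B (Suc j) \<in> \<B>1 \<union> {UNIV}" using BB Suc.prems by simp
    then have "(\<lambda>p. c (Suc j) * (\<lambda>(x1, x2). w x2 * indicator (B (Suc j)) x1) p) \<in> insert (\<lambda>_. 0) (posi PX)"
      using trm cnn Suc.prems by (intro posiN_scale) auto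
    from posiN_add[OF IH this]
    have "(\<lambda>p. (\<lambda>(x1, x2). \<Sum>k=1..j. c k * (w x2 * indicator (B k) x1)) p +
       c (Suc j) * (\<lambda>(x1, x2). w x2 * indicator (B (Suc j)) x1) p) \<in> insert (\<lambda>_. 0) (posi PX)" .
    moreover have "(\<lambda>p. (\<lambda>(x1, x2). \<Sum>k=1..j. c k * (w x2 * indicator (B k) x1)) p +
       c (Suc j) * (\<lambda>(x1, x2). w x2 * indicator (B (Suc j)) x1) p)
      = (\<lambda>(x1, x2). \<Sum>k=1..Suc j. c k * (w x2 * indicator (B k) x1))"
      by (rule ext) (simp add: case_prod_beta sum.cl_ivl_Suc)
    ultimately show ?case by simp
  qed
  have T0: "(\<lambda>p. c 0 * (\<lambda>(x1, x2). w x2 * indicator UNIV x1) p) \<in> insert (\<lambda>_. 0) (posi PX)"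
    using trm[of UNIV] cnn by (intro posiN_scale) auto
  define T where "T = (\<lambda>(x1, x2). s x1 * w x2)"
  have TN: "T \<in> insert (\<lambda>_. 0) (posi PX)"
  proof -
    from posiN_add[OF T0 sumN[OF order_refl]]
    have "(\<lambda>p. c 0 * (\<lambda>(x1, x2). w x2 * indicator UNIV x1) p +
          (\<lambda>(x1, x2). \<Sum>k=1..m. c k * (w x2 * indicator (B k) x1)) p) \<in> insert (\<lambda>_. 0) (posi PX)" .
    moreover have "(\<lambda>p. c 0 * (\<lambda>(x1, x2). w x2 * indicator UNIV x1) p +
          (\<lambda>(x1, x2). \<Sum>k=1..m. c k * (w x2 * indicator (B k) x1)) p) = T"
      unfolding T_def seq
      apply (rule ext)
      apply (simp add: case_prod_beta algebra_simps)
      apply (simp add: sum_distrib_left mult.left_commute)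
      done
    ultimately show ?thesis by simp
  qed
  define L where "L = (\<lambda>(x1 :: 'a, x2 :: 'b). (f x1 + g x1 * e) - a)"
  have LP: "L \<in> posi PX"
  proof -
    have "(\<lambda>(x1, x2). (\<lambda>x1. (f x1 + g x1 * e) - a) x1 * indicator UNIV x2) \<in> prod_D D1 \<B>1 D2 \<B>2"
      by (rule PD_A21[OF mem]) simp
    moreover have "(\<lambda>(x1, x2). (\<lambda>x1. (f x1 + g x1 * e) - a) x1 * indicator UNIV x2) = L"
      unfolding L_def by (rule ext) (simp add: case_prod_beta)
    ultimately show ?thesis using PDeq by simp
  qed
  have LT: "(\<lambda>p. L p + T p) \<in> posi PX" by (rule posiN_add2[OF LP TN])
  define Rf where "Rf = (\<lambda>(x1, x2). (g x1 - s x1) * (h x2 - e) + (\<epsilon> - s x1 * \<delta>))"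
  have Req: "(\<lambda>p. (\<lambda>p. (\<lambda>(x1, x2). f x1 + g x1 * h x2) p - (a - \<epsilon>)) p - (L p + T p)) = Rf"
    unfolding Rf_def L_def T_def w_def by (rule ext) (simp add: case_prod_beta algebra_simps)
  have Rg: "gamble Rf" unfolding Rf_def
    by (rule gamble_tensor_plus) (intro gamble_diff gamble_mult gg gsn h gamble_const)+
  have Rnn: "Rf p \<ge> 0" for p
  proof -
    obtain x1 x2 where p: "p = (x1, x2)" by (cases p)
    have a1: "\<bar>g x1 - s x1\<bar> \<le> \<eta>" using close[of x1] by simp
    have "\<bar>(g x1 - s x1) * (h x2 - e)\<bar> \<le> \<eta> * K"
      unfolding abs_mult by (rule mult_mono) (use a1 K \<eta>pos in auto)
    moreover have "\<eta> * K \<le> \<epsilon> / 4"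
    proof -
      have "\<eta> * K \<le> (\<epsilon> / (4 * (K + 1))) * K" unfolding \<eta>_def
        by (rule mult_right_mono) (use K in auto)
      also have "\<dots> \<le> \<epsilon> / 4"
      proof -
        have "K \<le> K + 1" by simp
        then have "\<epsilon> * K \<le> \<epsilon> * (K + 1)" using eps by (intro mult_left_mono) auto
        then show ?thesis using K(2) eps by (simp add: field_simps)
      qed
      finally show ?thesis .
    qed
    moreover have "s x1 * \<delta> \<le> \<epsilon> / 4"
    proof -
      have "s x1 \<le> G + 1" using a1 G(1)[of x1] \<eta>pos unfolding \<eta>_def by (smt (verit))
      then have "s x1 * \<delta> \<le> (G + 1) * \<delta>" using \<delta>pos by (intro mult_right_mono) auto
      also have "(G + 1) * \<delta> = \<epsilon> / 4" unfolding \<delta>_def using G(2) by (simp add: field_simps)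
      finally show ?thesis .
    qed
    ultimately show ?thesis unfolding p Rf_def using eps by (simp add: abs_le_iff)
  qed
  have "(\<lambda>p. (\<lambda>(x1, x2). f x1 + g x1 * h x2) p - (a - \<epsilon>)) \<in> posi PX"
  proof (rule posi_mono_pos[OF _ LT])
    show "pos_gambles \<subseteq> PX" unfolding PX_def by blast
    show "gamble (\<lambda>p. (\<lambda>p. (\<lambda>(x1, x2). f x1 + g x1 * h x2) p - (a - \<epsilon>)) p - (L p + T p))"
      unfolding Req by (rule Rg)
    fix p
    have "0 \<le> (\<lambda>p. (\<lambda>p. (\<lambda>(x1, x2). f x1 + g x1 * h x2) p - (a - \<epsilon>)) p - (L p + T p)) p"
      using fun_cong[OF Req, of p] Rnn[of p] by (simp only:)
    then show "L p + T p \<le> (\<lambda>(x1, x2). f x1 + g x1 * h x2) p - (a - \<epsilon>)" by simp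
  qed
  then show ?thesis using PDeq by simp
qed



lemma main:
  fixes D1 :: "('a \<Rightarrow> real) set" and D2 :: "('b \<Rightarrow> real) set"
  assumes c1: "coherent_D D1" and c2: "coherent_D D2" and f: "gamble f" and h: "gamble h"
    and g: "meas \<B>1 g"
  shows "lowprev_D (prod_D D1 \<B>1 D2 \<B>2) (\<lambda>(x1, x2). f x1 + g x1 * h x2) UNIV
       = lowprev_D D1 (\<lambda>x1. f x1 + g x1 * real_of_ereal (lowprev_D D2 h UNIV)) UNIV"
proof -
  obtain e where E: "lowprev_D D2 h UNIV = ereal e"
    and lo: "\<And>\<nu>. \<nu> < e \<Longrightarrow> (\<lambda>x. h x - \<nu>) \<in> D2"
    and hi: "\<And>\<nu>. \<nu> > e \<Longrightarrow> (\<lambda>x. h x - \<nu>) \<notin> D2"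
    using lowprev_finite[OF c2 h] by blast
  have gg: "gamble g" using g unfolding meas_def nonneg_gambles_def by auto
  have re: "real_of_ereal (lowprev_D D2 h UNIV) = e" using E by simp
  show ?thesis unfolding re unfolding lowprev_UNIV
  proof (rule antisym)
    show "Sup (ereal ` {\<mu>. (\<lambda>x. (\<lambda>(x1, x2). f x1 + g x1 * h x2) x - \<mu>) \<in> prod_D D1 \<B>1 D2 \<B>2})
      \<le> Sup (ereal ` {\<mu>. (\<lambda>x. f x + g x * e - \<mu>) \<in> D1})"
    proof (rule sup_eps)
      fix a \<epsilon> :: real
      assume "a \<in> {\<mu>. (\<lambda>x. (\<lambda>(x1, x2). f x1 + g x1 * h x2) x - \<mu>) \<in> prod_D D1 \<B>1 D2 \<B>2}" "\<epsilon> > 0"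
      then have "(\<lambda>x1. (f x1 + g x1 * e) - (a - \<epsilon>)) \<in> D1"
        by (intro dir2[OF c1 c2 f h gg lo hi]) auto
      then show "a - \<epsilon> \<in> {\<mu>. (\<lambda>x. f x + g x * e - \<mu>) \<in> D1}" by simp
    qed
    show "Sup (ereal ` {\<mu>. (\<lambda>x. f x + g x * e - \<mu>) \<in> D1})
      \<le> Sup (ereal ` {\<mu>. (\<lambda>x. (\<lambda>(x1, x2). f x1 + g x1 * h x2) x - \<mu>) \<in> prod_D D1 \<B>1 D2 \<B>2})"
    proof (rule sup_eps)
      fix a \<epsilon> :: real
      assume "a \<in> {\<mu>. (\<lambda>x. f x + g x * e - \<mu>) \<in> D1}" "\<epsilon> > 0"
      then have "(\<lambda>p. (\<lambda>(x1, x2). f x1 + g x1 * h x2) p - (a - \<epsilon>)) \<in> prod_D D1 \<B>1 D2 \<B>2"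
        by (intro dir1[OF c1 c2 f h g lo]) auto
      then show "a - \<epsilon> \<in> {\<mu>. (\<lambda>x. (\<lambda>(x1, x2). f x1 + g x1 * h x2) x - \<mu>) \<in> prod_D D1 \<B>1 D2 \<B>2}"
        by simp
    qed
  qed
qed

theorem theorem21:
  fixes P1 :: "('a \<Rightarrow> real) \<Rightarrow> 'a set \<Rightarrow> ereal" and C1 :: "(('a \<Rightarrow> real) \<times> 'a set) set"
    and P2 :: "('b \<Rightarrow> real) \<Rightarrow> 'b set \<Rightarrow> ereal" and C2 :: "(('b \<Rightarrow> real) \<times> 'b set) set"
    and \<B>1 :: "'a set set" and \<B>2 :: "'b set set"
  assumes "{} \<notin> \<B>1" and "{} \<notin> \<B>2"
    and "coherent_lp P1 C1" and "coherent_lp P2 C2"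
  shows "(\<forall>(f::'a \<Rightarrow> real) (g::'a \<Rightarrow> real) (h::'b \<Rightarrow> real).
            gamble f \<and> gamble h \<and> meas \<B>1 g \<longrightarrow>
            prod_lp P1 C1 \<B>1 P2 C2 \<B>2 (\<lambda>(x1, x2). f x1 + g x1 * h x2) UNIV
            = nat_ext P1 C1 (\<lambda>x1. f x1 + g x1 * real_of_ereal (nat_ext P2 C2 h UNIV)) UNIV)
       \<and> (\<forall>(f::'b \<Rightarrow> real) (g::'b \<Rightarrow> real) (h::'a \<Rightarrow> real).
            gamble f \<and> gamble h \<and> meas \<B>2 g \<longrightarrow>
            prod_lp P1 C1 \<B>1 P2 C2 \<B>2 (\<lambda>(x1, x2). f x2 + g x2 * h x1) UNIV
            = nat_ext P2 C2 (\<lambda>x2. f x2 + g x2 * real_of_ereal (nat_ext P1 C1 h UNIV)) UNIV)"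
proof (intro conjI allI impI)
  have c1: "coherent_D (ext_lp P1 C1)" by (rule ext_lp_coherent[OF assms(3)])
  have c2: "coherent_D (ext_lp P2 C2)" by (rule ext_lp_coherent[OF assms(4)])
  fix f g :: "'a \<Rightarrow> real" and h :: "'b \<Rightarrow> real"
  assume fgh: "gamble f \<and> gamble h \<and> meas \<B>1 g"
  show "prod_lp P1 C1 \<B>1 P2 C2 \<B>2 (\<lambda>(x1, x2). f x1 + g x1 * h x2) UNIV
            = nat_ext P1 C1 (\<lambda>x1. f x1 + g x1 * real_of_ereal (nat_ext P2 C2 h UNIV)) UNIV"
    unfolding prod_lp_def nat_ext_def using fgh by (intro main[OF c1 c2]) auto
next
  have c1: "coherent_D (ext_lp P1 C1)" by (rule ext_lp_coherent[OF assms(3)])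
  have c2: "coherent_D (ext_lp P2 C2)" by (rule ext_lp_coherent[OF assms(4)])
  fix f g :: "'b \<Rightarrow> real" and h :: "'a \<Rightarrow> real"
  assume fgh: "gamble f \<and> gamble h \<and> meas \<B>2 g"
  have "lowprev_D (prod_D (ext_lp P1 C1) \<B>1 (ext_lp P2 C2) \<B>2) (\<lambda>(x1, x2). f x2 + g x2 * h x1) UNIV
      = lowprev_D (prod_D (ext_lp P2 C2) \<B>2 (ext_lp P1 C1) \<B>1)
          (\<lambda>(y1, y2). (\<lambda>(x1, x2). f x2 + g x2 * h x1) (y2, y1)) UNIV"
    by (rule lowprev_swap)
  also have "(\<lambda>(y1, y2). (\<lambda>(x1, x2). f x2 + g x2 * h x1) (y2, y1)) = (\<lambda>(y1, y2). f y1 + g y1 * h y2)"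
    by (rule ext) (simp add: case_prod_beta)
  also have "lowprev_D (prod_D (ext_lp P2 C2) \<B>2 (ext_lp P1 C1) \<B>1) (\<lambda>(y1, y2). f y1 + g y1 * h y2) UNIV
      = lowprev_D (ext_lp P2 C2) (\<lambda>x1. f x1 + g x1 * real_of_ereal (lowprev_D (ext_lp P1 C1) h UNIV)) UNIV"
    using fgh by (intro main[OF c2 c1]) auto
  finally show "prod_lp P1 C1 \<B>1 P2 C2 \<B>2 (\<lambda>(x1, x2). f x2 + g x2 * h x1) UNIV
            = nat_ext P2 C2 (\<lambda>x2. f x2 + g x2 * real_of_ereal (nat_ext P1 C1 h UNIV)) UNIV"
    unfolding prod_lp_def nat_ext_def .
qed


end
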